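(* Let $\mathbb{T}=\mathbb{R}/\mathbb{Z}$ and let $u:\mathbb{T}\times[0,T]\to\mathbb{R}$ be smooth with $u_{xx}\in C(\mathbb{T}\times[0,T])$. Assume there is a constant $C_1>0$ with $h^4\le C_1\Delta t$. Then there exists $C>0$, independent of the meshes, $n$ and $g$, such that for every $n\in\{0,\dots,N-1\}$ with $\Delta t_n$ sufficiently small and every $g\in H^2(\mathbb{T})$, $$\|g\circ X^n\|_{H^2_{h,\Delta t}(\mathbb{T})}\le(1+C\Delta t_n)\|g\|_{H^2_{h,\Delta t}(\mathbb{T})}.$$
   Context: Temporal mesh $0=t^0<\dots<t^N=T$, $\Delta t_n=t^{n+1}-t^n$, $\Delta t=\max_n\Delta t_n<1$. Spatial mesh $0=x_0<\dots<x_M=1$, $h=\max_j(x_{j+1}-x_j)$. $X^n(x)=x-\Delta t_n(\tfrac16k_1^n+\tfrac46k_2^n+\tfrac16k_3^n)(x)$ with $k_1^n(x)=u(x,t^{n+1})$, $k_2^n(x)=u(x-\tfrac{\Delta t_n}{2}k_1^n(x),t^{n+1}-\tfrac{\Delta t_n}{2})$, $k_3^n(x)=u(x-\Delta t_n(-k_1^n(x)+2k_2^n(x)),t^{n+1}-\Delta t_n)$. $\|g\|_{H^2_{h,\Delta t}(\mathbb{T})}=\big(\|g\|_{L^2}^2+\tfrac{h^4}{\Delta t}\|g''\|_{L^2}^2\big)^{1/2}$. *)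

theory Defs
  imports "HOL-Analysis.Analysis"
begin

text \<open>Functions on the torus T = R/Z are represented as 1-periodic functions on R.\<close>

definition periodic1 :: "(real \<Rightarrow> real) \<Rightarrow> bool" where
  "periodic1 g \<longleftrightarrow> (\<forall>x. g (x + 1) = g x)"

definition weak_d2 :: "(real \<Rightarrow> real) \<Rightarrow> (real \<Rightarrow> real) \<Rightarrow> bool" where
  "weak_d2 g g2 \<longleftrightarrow> (\<exists>g1. (\<forall>x. (g has_real_derivative g1 x) (at x)) \<and>
     (\<forall>a b. a \<le> b \<longrightarrow> g2 integrable_on {a..b} \<and> g1 b - g1 a = integral {a..b} g2))"

definition H2_per :: "(real \<Rightarrow> real) \<Rightarrow> bool" where
  "H2_per g \<longleftrightarrow> periodic1 g \<and>
     (\<exists>g2. weak_d2 g g2 \<and> (\<lambda>x. (g2 x)\<^sup>2) integrable_on {0..1})"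

definition d2 :: "(real \<Rightarrow> real) \<Rightarrow> (real \<Rightarrow> real)" where
  "d2 g = (SOME g2. weak_d2 g g2 \<and> (\<lambda>x. (g2 x)\<^sup>2) integrable_on {0..1})"

definition L2_norm :: "(real \<Rightarrow> real) \<Rightarrow> real" where
  "L2_norm g = sqrt (integral {0..1} (\<lambda>x. (g x)\<^sup>2))"

definition H2_hdt_norm :: "real \<Rightarrow> real \<Rightarrow> (real \<Rightarrow> real) \<Rightarrow> real" where
  "H2_hdt_norm h dt g = sqrt ((L2_norm g)\<^sup>2 + h ^ 4 / dt * (L2_norm (d2 g))\<^sup>2)"

text \<open>The RK3 characteristic foot map X^n, with dtn = Delta t_n and t1 = t^{n+1}.
  The velocity u is written u x t.\<close>
definition Xmap :: "(real \<Rightarrow> real \<Rightarrow> real) \<Rightarrow> real \<Rightarrow> real \<Rightarrow> real \<Rightarrow> real" where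
  "Xmap u dtn t1 x =
    (let k1 = u x t1;
         k2 = u (x - dtn / 2 * k1) (t1 - dtn / 2);
         k3 = u (x - dtn * (- k1 + 2 * k2)) (t1 - dtn)
     in x - dtn * (k1 / 6 + 4 / 6 * k2 + k3 / 6))"

definition partition :: "nat \<Rightarrow> (nat \<Rightarrow> real) \<Rightarrow> real \<Rightarrow> bool" where
  "partition K p L \<longleftrightarrow> p 0 = 0 \<and> p K = L \<and> (\<forall>i<K. p i < p (Suc i))"

definition mesh_size :: "nat \<Rightarrow> (nat \<Rightarrow> real) \<Rightarrow> real" where
  "mesh_size K p = Max ((\<lambda>i. p (Suc i) - p i) ` {..<K})"

end

theory Submission
  imports Defs
begin

lemma per_nat: assumes "\<And>x. f (x + 1) = (f x :: 'a)" shows "f (x + real n) = f x"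
proof (induction n)
  case (Suc n)
  have "f (x + real (Suc n)) = f ((x + real n) + 1)" by (simp add: algebra_simps)
  also have "\<dots> = f (x + real n)" by (rule assms)
  finally show ?case using Suc by simp
qed simp

lemma per_int: assumes "\<And>x. f (x + 1) = (f x :: 'a)" shows "f (x + real_of_int k) = f x"
proof (cases "k \<ge> 0")
  case True
  then obtain n where "k = int n" by (metis nonneg_int_cases)
  then show ?thesis using per_nat[of f, OF assms] by simp
next
  case False
  then obtain n where n: "k = - int n" by (metis nonpos_int_cases linear)
  have "f (x + real_of_int k) = f ((x + real_of_int k) + real n)"
    using per_nat[of f, OF assms] by simp
  also have "\<dots> = f x" using n by simp
  finally show ?thesis .
qed

lemma per_shift_int:
  fixes f :: "real \<Rightarrow> real"
  assumes p: "\<And>x. f (x + 1) = f x" and I: "(f has_integral I) {0..1}"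
  shows "(f has_integral I) {real_of_int k..real_of_int k + 1}"
proof -
  have "f \<circ> (+) (real_of_int k) = f" using per_int[of f, OF p] by (auto simp: add.commute)
  with I have "((f \<circ> (+) (real_of_int k)) has_integral I) {0..1}" by simp
  then show ?thesis by (subst (asm) has_integral_shift_Icc_real) (simp add: add.commute)
qed

lemma per_integrable:
  fixes f :: "real \<Rightarrow> real"
  assumes p: "\<And>x. f (x + 1) = f x" and I: "f integrable_on {0..1}"
  shows "f integrable_on {a..b}"
proof -
  have u: "f integrable_on {real_of_int k..real_of_int k + 1}" for k
    using per_shift_int[OF p integrable_integral[OF I], of k] by blast
  have n: "f integrable_on {- real n..real n}" for n
  proof (induction n)
    case 0 then show ?case using integrable_on_refl[of f "0::real"] by simp
  next
    case (Suc n)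
    have a: "f integrable_on {- real (Suc n).. - real n}"
      using u[of "- int (Suc n)"] by simp
    have b: "f integrable_on {real n.. real (Suc n)}"
      using u[of "int n"] by (simp add: add.commute)
    have "f integrable_on {- real (Suc n).. real n}"
      by (rule Henstock_Kurzweil_Integration.integrable_combine[OF _ _ a Suc]) auto
    then show ?case by (intro Henstock_Kurzweil_Integration.integrable_combine[OF _ _ _ b]) auto
  qed
  obtain n :: nat where "max \<bar>a\<bar> \<bar>b\<bar> \<le> real n" using real_arch_simple by blast
  hence "{a..b} \<subseteq> {- real n..real n}" by auto
  then show ?thesis using n[of n] integrable_on_subinterval by blast
qed

lemma per_integral:
  fixes f :: "real \<Rightarrow> real"
  assumes p: "\<And>x. f (x + 1) = f x" and I: "f integrable_on {0..1}"
  shows "integral {c..c+1} f = integral {0..1} f"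
proof -
  define k where "k = floor c"
  have k1: "real_of_int k \<le> c" "c < real_of_int k + 1" unfolding k_def by linarith+
  have fi: "\<And>a b. f integrable_on {a..b}" using per_integrable[OF p I] .
  have "integral {c..c+1} f = integral {c..real_of_int k + 1} f + integral {real_of_int k+1..c+1} f"
    using k1 by (intro Henstock_Kurzweil_Integration.integral_combine[symmetric] fi) auto
  also have "integral {real_of_int k+1..c+1} f = integral {real_of_int k..c} f"
  proof -
    have "f \<circ> (+) 1 = f" using p by (auto simp: add.commute)
    moreover have "((f \<circ> (+) 1) has_integral integral {real_of_int k + 1..c + 1} f) {real_of_int k..c}"
      by (subst has_integral_shift_Icc_real) (simp add: add.commute fi integrable_integral)
    ultimately show ?thesis by (simp add: integral_unique)
  qed
  also have "integral {c..real_of_int k + 1} f + integral {real_of_int k..c} f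
       = integral {real_of_int k..real_of_int k + 1} f"
    using k1 by (subst Henstock_Kurzweil_Integration.integral_combine[symmetric, of _ c]) (auto intro: fi)
  also have "\<dots> = integral {0..1} f"
    using per_shift_int[OF p integrable_integral[OF I], of k] by (simp add: integral_unique)
  finally show ?thesis .
qed

lemma ae_zero:
  fixes f :: "real \<Rightarrow> real"
  assumes int: "\<And>a b. f integrable_on {a..b}"
    and z: "\<And>a b. a \<le> b \<Longrightarrow> integral {a..b} f = 0"
  shows "negligible {x. f x \<noteq> 0}"
proof -
  have "\<And>a b. f integrable_on cbox a b" using int by simp
  then obtain N where N: "negligible N"
    and k: "\<And>x e. \<lbrakk>x \<notin> N; 0 < e\<rbrakk> \<Longrightarrow>
               \<exists>d>0. \<forall>h. 0 < h \<and> h < d \<longrightarrow>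
                         norm(integral (cbox x (x + h *\<^sub>R One)) f /\<^sub>R h ^ DIM(real) - f x) < e"
    using integrable_ccontinuous_explicit by blast
  have "{x. f x \<noteq> 0} \<subseteq> N"
  proof
    fix x assume "x \<in> {x. f x \<noteq> 0}"
    hence fx: "f x \<noteq> 0" by simp
    show "x \<in> N"
    proof (rule ccontr)
      assume "x \<notin> N"
      from k[OF this, of "\<bar>f x\<bar>"] fx obtain d where d: "d > 0"
        and dd: "\<And>h. 0 < h \<and> h < d \<Longrightarrow> norm(integral (cbox x (x + h *\<^sub>R One)) f /\<^sub>R h ^ DIM(real) - f x) < \<bar>f x\<bar>"
        by auto
      have "norm(integral (cbox x (x + (d/2) *\<^sub>R One)) f /\<^sub>R (d/2) ^ DIM(real) - f x) < \<bar>f x\<bar>"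
        using dd[of "d/2"] d by auto
      moreover have "integral (cbox x (x + (d/2) *\<^sub>R One)) f = 0"
        using z[of x "x + d/2"] d by simp
      ultimately show False by simp
    qed
  qed
  then show ?thesis using N negligible_subset by blast
qed

definition wk :: "(real \<Rightarrow> real) \<Rightarrow> (real \<Rightarrow> real) \<Rightarrow> (real \<Rightarrow> real) \<Rightarrow> bool" where
  "wk g g1 g2 \<longleftrightarrow> (\<forall>x. (g has_real_derivative g1 x) (at x)) \<and>
     (\<forall>a b. a \<le> b \<longrightarrow> (g2 has_integral (g1 b - g1 a)) {a..b})"

lemma weak_d2_wk: assumes "weak_d2 g g2" obtains g1 where "wk g g1 g2"
  using assms unfolding weak_d2_def wk_def by (metis has_integral_integrable_integral)

lemma wk_cont: assumes "wk g g1 g2" shows "continuous_on {a..b} g1"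
proof (cases "a \<le> b")
  case True
  have i: "g2 integrable_on {a..b}" using assms True unfolding wk_def by blast
  have "continuous_on {a..b} (\<lambda>x. g1 a + integral {a..x} g2)"
    by (intro continuous_intros indefinite_integral_continuous_1 i)
  moreover have "g1 a + integral {a..x} g2 = g1 x" if "x \<in> {a..b}" for x
  proof -
    have "(g2 has_integral g1 x - g1 a) {a..x}" using assms that unfolding wk_def by auto
    then show ?thesis by (simp add: integral_unique)
  qed
  ultimately show ?thesis using continuous_on_eq by (metis (no_types, lifting))
qed simp

lemma deriv_periodic:
  assumes d: "\<And>x. (g has_real_derivative g1 x) (at x)" and p: "\<And>x. g (x + 1) = g x"
  shows "g1 (x + 1) = g1 x"
proof -
  have "((\<lambda>y. g (y + 1)) has_real_derivative g1 (x + 1) * 1) (at x)"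
    by (rule DERIV_chain2[OF d]) (auto intro!: derivative_eq_intros)
  moreover have "(\<lambda>y. g (y + 1)) = g" using p by auto
  ultimately show ?thesis using d[of x] DERIV_unique by fastforce
qed

lemma gpack:
  assumes H: "H2_per g"
  obtains g1 G2 where "wk g g1 G2" "\<And>x. g (x+1) = g x" "\<And>x. g1 (x+1) = g1 x"
    "\<And>x. G2 (x+1) = G2 x"
    "\<And>a b. G2 absolutely_integrable_on {a..b}" "\<And>a b. (\<lambda>x. (G2 x)\<^sup>2) integrable_on {a..b}"
    "integral {0..1} (\<lambda>x. (G2 x)\<^sup>2) = integral {0..1} (\<lambda>x. (d2 g x)\<^sup>2)"
    "\<And>a b. continuous_on {a..b} g1"
proof -
  have pg: "\<And>x. g (x+1) = g x" using H unfolding H2_per_def periodic1_def by blast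
  have ex: "\<exists>g2. weak_d2 g g2 \<and> (\<lambda>x. (g2 x)\<^sup>2) integrable_on {0..1}"
    using H unfolding H2_per_def by blast
  define g2 where "g2 = d2 g"
  have g2: "weak_d2 g g2" "(\<lambda>x. (g2 x)\<^sup>2) integrable_on {0..1}"
    using someI_ex[OF ex] unfolding g2_def d2_def by blast+
  obtain g1 where w: "wk g g1 g2" using weak_d2_wk[OF g2(1)] .
  have gd: "\<And>x. (g has_real_derivative g1 x) (at x)" and gi: "\<And>a b. a \<le> b \<Longrightarrow> (g2 has_integral (g1 b - g1 a)) {a..b}"
    using w unfolding wk_def by auto
  have p1: "\<And>x. g1 (x+1) = g1 x" by (rule deriv_periodic[OF gd pg])
  have g2int: "g2 integrable_on {a..b}" for a b
  proof (cases "a \<le> b")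
    case True then show ?thesis using gi by blast
  next
    case False then show ?thesis by (simp add: integrable_on_empty)
  qed
  define G2 where "G2 x = g2 (x - real_of_int (floor x))" for x
  have negk: "negligible {x. g2 (x - real_of_int k) - g2 x \<noteq> 0}" for k :: int
  proof (rule ae_zero)
    have s2: "a \<le> b \<Longrightarrow> ((\<lambda>x. g2 (x - real_of_int k)) has_integral (g1 b - g1 a)) {a..b}" for a b
    proof -
      assume ab: "a \<le> b"
      let ?I = "g1 (b - real_of_int k) - g1 (a - real_of_int k)"
      have "(g2 has_integral ?I) {a + - real_of_int k..b + - real_of_int k}"
        using gi[of "a - real_of_int k" "b - real_of_int k"] ab by simp
      hence "((g2 \<circ> (+) (- real_of_int k)) has_integral ?I) {a..b}"
        using has_integral_shift_Icc_real[of g2 "- real_of_int k" ?I a b] by simp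
      moreover have "g2 \<circ> (+) (- real_of_int k) = (\<lambda>x. g2 (x - real_of_int k))" by (auto simp: o_def)
      moreover have "g1 (y - real_of_int k) = g1 y" for y
        using per_int[of g1, OF p1, of "y - real_of_int k" k] by simp
      ultimately show ?thesis by simp
    qed
    show "(\<lambda>x. g2 (x - real_of_int k) - g2 x) integrable_on {a..b}" for a b
    proof (cases "a \<le> b")
      case True then show ?thesis using s2[OF True] g2int[of a b] by (intro integrable_diff) (auto simp: has_integral_integrable)
    next
      case False then show ?thesis by (simp add: integrable_on_empty)
    qed
    show "integral {a..b} (\<lambda>x. g2 (x - real_of_int k) - g2 x) = 0" if "a \<le> b" for a b
      using has_integral_diff[OF s2[OF that] gi[OF that]] by (simp add: integral_unique)
  qed
  have negG: "negligible {x. G2 x \<noteq> g2 x}"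
  proof -
    have "{x. G2 x \<noteq> g2 x} \<subseteq> \<Union> ((\<lambda>k. {x. g2 (x - real_of_int k) - g2 x \<noteq> 0}) ` UNIV)"
      unfolding G2_def by auto
    moreover have "negligible (\<Union> ((\<lambda>k::int. {x. g2 (x - real_of_int k) - g2 x \<noteq> 0}) ` UNIV))"
      using negk by (intro negligible_countable_Union) auto
    ultimately show ?thesis using negligible_subset by blast
  qed
  have wG: "wk g g1 G2" unfolding wk_def
  proof (intro conjI allI impI gd)
    fix a b :: real assume "a \<le> b"
    show "(G2 has_integral g1 b - g1 a) {a..b}"
      by (rule has_integral_spike[OF negG _ gi[OF \<open>a \<le> b\<close>]]) auto
  qed
  have pG: "G2 (x+1) = G2 x" for x
  proof -
    have "real_of_int (floor (x+1)) = real_of_int (floor x) + 1" by simp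
    then show ?thesis unfolding G2_def by (simp add: algebra_simps)
  qed
  have sq01: "(\<lambda>x. (G2 x)\<^sup>2) integrable_on {0..1}"
    by (rule integrable_spike[OF g2(2) negG]) auto
  have sqint: "(\<lambda>x. (G2 x)\<^sup>2) integrable_on {a..b}" for a b
    by (rule per_integrable[OF _ sq01]) (simp add: pG)
  have Gint: "G2 integrable_on {a..b}" for a b
  proof -
    have "(G2 has_integral g1 1 - g1 0) {0..1}" using wG unfolding wk_def by auto
    hence "G2 integrable_on {0..1}" by blast
    then show ?thesis by (rule per_integrable[rotated]) (simp add: pG)
  qed
  have Gabs: "G2 absolutely_integrable_on {a..b}" for a b
  proof (rule absolutely_integrable_integrable_bound[where g = "\<lambda>x. (1 + (G2 x)\<^sup>2) / 2"])
    show "norm (G2 x) \<le> (1 + (G2 x)\<^sup>2) / 2" for x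
    proof -
      have "0 \<le> (\<bar>G2 x\<bar> - 1)\<^sup>2" by simp
      then show ?thesis by (simp add: power2_eq_square algebra_simps)
    qed
    show "G2 integrable_on {a..b}" by (rule Gint)
    show "(\<lambda>x. (1 + (G2 x)\<^sup>2) / 2) integrable_on {a..b}"
    proof -
      have "(\<lambda>x. 1 + (G2 x)\<^sup>2) integrable_on {a..b}"
        using integrable_const[of "1::real" a b] sqint[of a b] by (intro integrable_add) auto
      then show ?thesis by simp
    qed
  qed
  have eq: "integral {0..1} (\<lambda>x. (G2 x)\<^sup>2) = integral {0..1} (\<lambda>x. (d2 g x)\<^sup>2)"
    unfolding g2_def[symmetric]
    by (rule integral_spike[OF negG]) auto
  show ?thesis
    by (rule that[OF wG pg p1 pG Gabs sqint eq wk_cont[OF w]])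
qed

lemma absmul:
  fixes k c :: "real \<Rightarrow> real"
  assumes "k absolutely_integrable_on {a..b}" "continuous_on {a..b} c"
  shows "(\<lambda>x. c x * k x) absolutely_integrable_on {a..b}"
proof (rule absolutely_integrable_bounded_measurable_product_real)
  show "c \<in> borel_measurable (lebesgue_on {a..b})"
    by (rule continuous_imp_measurable_on_sets_lebesgue) (use assms in auto)
  show "{a..b} \<in> sets lebesgue" by simp
  show "bounded (c ` {a..b})" using compact_continuous_image[OF assms(2)] compact_imp_bounded by auto
qed (rule assms(1))

lemma cmul_int: "f integrable_on S \<Longrightarrow> (\<lambda>x. (c::real) * f x) integrable_on S"
  using integrable_on_cmult_left[of f S c] by simp

lemma abs_int_sub:
  fixes k :: "real \<Rightarrow> real"
  assumes "k absolutely_integrable_on {a..b}" "a \<le> x" "y \<le> b"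
  shows "k integrable_on {x..y}" "(\<lambda>s. \<bar>k s\<bar>) integrable_on {x..y}"
proof -
  have "k integrable_on {a..b}" "(\<lambda>s. norm (k s)) integrable_on {a..b}"
    using assms(1) absolutely_integrable_on_def by blast+
  then show "k integrable_on {x..y}" "(\<lambda>s. \<bar>k s\<bar>) integrable_on {x..y}"
    using assms(2,3) integrable_on_subinterval[of _ "{a..b}" x y] by (auto simp: subset_iff)
qed

lemma ibp:
  fixes F k phi phi' :: "real \<Rightarrow> real"
  assumes ab: "a \<le> b"
    and Fk: "\<And>x y. a \<le> x \<Longrightarrow> x \<le> y \<Longrightarrow> y \<le> b \<Longrightarrow> (k has_integral (F y - F x)) {x..y}"
    and kabs: "k absolutely_integrable_on {a..b}"
    and dphi: "\<And>x. x \<in> {a..b} \<Longrightarrow> (phi has_real_derivative phi' x) (at x)"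
    and cphi': "continuous_on {a..b} phi'"
    and lip: "\<And>x y. x \<in> {a..b} \<Longrightarrow> y \<in> {a..b} \<Longrightarrow> \<bar>phi x - phi y\<bar> \<le> M * \<bar>x - y\<bar>"
  shows "((\<lambda>x. k x * phi x + F x * phi' x) has_integral (F b * phi b - F a * phi a)) {a..b}"
proof (cases "a = b")
  case True then show ?thesis by (simp add: has_integral_refl)
next
  case False
  with ab have ab': "a < b" by simp
  have M0: "M \<ge> 0"
  proof -
    have "0 \<le> \<bar>phi a - phi b\<bar>" by simp
    also have "\<dots> \<le> M * \<bar>a - b\<bar>" using lip[of a b] ab by auto
    finally show ?thesis using ab' by (simp add: zero_le_mult_iff)
  qed
  have kint: "\<And>x y. a \<le> x \<Longrightarrow> y \<le> b \<Longrightarrow> k integrable_on {x..y}"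
   and nkint: "\<And>x y. a \<le> x \<Longrightarrow> y \<le> b \<Longrightarrow> (\<lambda>s. \<bar>k s\<bar>) integrable_on {x..y}"
    using abs_int_sub[OF kabs] by auto
  have cphi: "continuous_on {a..b} phi"
    using dphi by (meson DERIV_continuous continuous_at_imp_continuous_on)
  define kp where "kp s = phi s * k s" for s
  have kpabs: "kp absolutely_integrable_on {a..b}" unfolding kp_def by (rule absmul[OF kabs cphi])
  have kpint: "\<And>x y. a \<le> x \<Longrightarrow> y \<le> b \<Longrightarrow> kp integrable_on {x..y}"
    using abs_int_sub[OF kpabs] by auto
  have Fa: "F x = F a + integral {a..x} k" if "x \<in> {a..b}" for x
    using Fk[of a x] that by (auto simp: integral_unique)
  have Fc: "continuous_on {a..b} F"
  proof -
    have "continuous_on {a..b} (\<lambda>x. F a + integral {a..x} k)"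
      by (intro continuous_intros indefinite_integral_continuous_1 kint) auto
    then show ?thesis using continuous_on_eq Fa by (metis (no_types, lifting))
  qed
  define Fp where "Fp s = F s * phi' s" for s
  have Fpc: "continuous_on {a..b} Fp" unfolding Fp_def by (intro continuous_intros Fc cphi')
  define J where "J y = integral {a..y} (\<lambda>s. \<bar>k s\<bar>)" for y
  define E where "E y = F y * phi y - integral {a..y} kp" for y
  define D where "D y = E y - integral {a..y} Fp" for y
  have key: "\<bar>E q - E p - F c * (phi q - phi p)\<bar> \<le> M * (q - p) * (J q - J p)"
    if pq: "a \<le> p" "p \<le> q" "q \<le> b" and c: "c = p \<or> c = q" for p q c
  proof -
    define r where "r = (if c = p then q else p)"
    have r: "r \<in> {p..q}" using pq unfolding r_def by auto
    have I1: "integral {a..q} kp = integral {a..p} kp + integral {p..q} kp"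
      using pq kpint[of a q] by (intro Henstock_Kurzweil_Integration.integral_combine[symmetric]) auto
    have J1: "J q = J p + integral {p..q} (\<lambda>s. \<bar>k s\<bar>)"
      unfolding J_def using pq nkint[of a q] by (intro Henstock_Kurzweil_Integration.integral_combine[symmetric]) auto
    have Fq: "F q - F p = integral {p..q} k" using Fk[OF pq] by (simp add: integral_unique)
    have ki: "k integrable_on {p..q}" "kp integrable_on {p..q}" "(\<lambda>s. \<bar>k s\<bar>) integrable_on {p..q}"
      using pq kint kpint nkint by auto
    have gi: "(\<lambda>s. k s * (phi r - phi s)) integrable_on {p..q}"
    proof -
      have "(\<lambda>s. phi r * k s - kp s) integrable_on {p..q}"
        using ki by (intro integrable_diff cmul_int) auto
      moreover have "(\<lambda>s. phi r * k s - kp s) = (\<lambda>s. k s * (phi r - phi s))"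
        by (auto simp: kp_def algebra_simps)
      ultimately show ?thesis by simp
    qed
    have eq1: "integral {p..q} (\<lambda>s. k s * (phi r - phi s)) = phi r * integral {p..q} k - integral {p..q} kp"
    proof -
      have "integral {p..q} (\<lambda>s. phi r * k s - kp s) = phi r * integral {p..q} k - integral {p..q} kp"
        using ki by (subst Henstock_Kurzweil_Integration.integral_diff) (auto intro: cmul_int simp: integral_mult_right)
      moreover have "(\<lambda>s. phi r * k s - kp s) = (\<lambda>s. k s * (phi r - phi s))"
        by (auto simp: kp_def algebra_simps)
      ultimately show ?thesis by simp
    qed
    have eq2': "E q - E p - F c * (phi q - phi p) = phi r * (F q - F p) - integral {p..q} kp"
      using I1 c unfolding E_def r_def by (cases "c = p") (auto simp: algebra_simps)
    have eq2: "E q - E p - F c * (phi q - phi p) = integral {p..q} (\<lambda>s. k s * (phi r - phi s))"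
      unfolding eq2' eq1 Fq ..
    have "norm (integral {p..q} (\<lambda>s. k s * (phi r - phi s))) \<le> integral {p..q} (\<lambda>s. M * (q - p) * \<bar>k s\<bar>)"
    proof (rule Henstock_Kurzweil_Integration.integral_norm_bound_integral)
      show "(\<lambda>s. k s * (phi r - phi s)) integrable_on {p..q}" by (rule gi)
      show "(\<lambda>s. M * (q - p) * \<bar>k s\<bar>) integrable_on {p..q}" using ki(3) by (intro cmul_int) auto
      fix s assume s: "s \<in> {p..q}"
      have "\<bar>phi r - phi s\<bar> \<le> M * \<bar>r - s\<bar>" using lip[of r s] r s pq by auto
      also have "\<dots> \<le> M * (q - p)" using r s M0 by (intro mult_left_mono) auto
      finally have "\<bar>k s\<bar> * \<bar>phi r - phi s\<bar> \<le> \<bar>k s\<bar> * (M * (q - p))" by (intro mult_left_mono) auto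
      then show "norm (k s * (phi r - phi s)) \<le> M * (q - p) * \<bar>k s\<bar>"
        by (simp only: real_norm_def abs_mult) (simp add: mult_ac)
    qed
    hence "\<bar>integral {p..q} (\<lambda>s. k s * (phi r - phi s))\<bar> \<le> integral {p..q} (\<lambda>s. M * (q - p) * \<bar>k s\<bar>)" by simp
    also have "\<dots> = M * (q - p) * (J q - J p)" using J1 by simp
    finally show ?thesis using eq2 by simp
  qed
  have Jc: "continuous_on {a..b} J" unfolding J_def by (intro indefinite_integral_continuous_1 nkint) auto
  have dE: "(E has_real_derivative F x * phi' x) (at x)" if x: "a < x" "x < b" for x
  proof -
    have ev: "eventually (\<lambda>y. y \<in> {a<..<b} \<and> y \<noteq> x) (at x)"
      using x by (intro eventually_conj eventually_at_in_open') (auto simp: eventually_at_filter)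
    have lim1: "((\<lambda>y. F x * ((phi y - phi x) / (y - x))) \<longlongrightarrow> F x * phi' x) (at x)"
      using dphi[of x] x by (intro tendsto_mult_left) (simp add: has_field_derivative_iff)
    have Jt: "(J \<longlongrightarrow> J x) (at x)"
    proof -
      have "isCont J x" by (rule continuous_on_interior[OF Jc]) (use x in auto)
      then show ?thesis by (simp add: isCont_def)
    qed
    have lim2: "((\<lambda>y. M * \<bar>J y - J x\<bar>) \<longlongrightarrow> 0) (at x)"
    proof -
      have "((\<lambda>y. M * \<bar>J y - J x\<bar>) \<longlongrightarrow> M * \<bar>J x - J x\<bar>) (at x)"
        by (intro tendsto_intros Jt)
      then show ?thesis by simp
    qed
    have lim3: "((\<lambda>y. (E y - E x - F x * (phi y - phi x)) / (y - x)) \<longlongrightarrow> 0) (at x)"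
    proof (rule Lim_null_comparison[OF _ lim2])
      show "eventually (\<lambda>y. norm ((E y - E x - F x * (phi y - phi x)) / (y - x)) \<le> M * \<bar>J y - J x\<bar>) (at x)"
        using ev
      proof (rule eventually_mono)
        fix y assume y: "y \<in> {a<..<b} \<and> y \<noteq> x"
        have b1: "\<bar>E y - E x - F x * (phi y - phi x)\<bar> \<le> M * \<bar>y - x\<bar> * \<bar>J y - J x\<bar>"
        proof (cases "x \<le> y")
          case True
          have "\<bar>E y - E x - F x * (phi y - phi x)\<bar> \<le> M * (y - x) * (J y - J x)"
            using key[of x y x] True x y by auto
          also have "\<dots> \<le> M * (y - x) * \<bar>J y - J x\<bar>"
            using M0 True by (intro mult_left_mono abs_ge_self) auto
          also have "\<dots> = M * \<bar>y - x\<bar> * \<bar>J y - J x\<bar>" using True by simp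
          finally show ?thesis .
        next
          case False
          have "\<bar>E x - E y - F x * (phi x - phi y)\<bar> \<le> M * (x - y) * (J x - J y)"
            using key[of y x x] False x y by auto
          also have "\<dots> \<le> M * (x - y) * \<bar>J x - J y\<bar>"
            using M0 False by (intro mult_left_mono abs_ge_self) auto
          also have "\<dots> = M * \<bar>y - x\<bar> * \<bar>J y - J x\<bar>" using False by (simp add: abs_minus_commute)
          finally show ?thesis by (simp add: algebra_simps abs_minus_commute)
        qed
        have "\<bar>y - x\<bar> > 0" using y by auto
        then show "norm ((E y - E x - F x * (phi y - phi x)) / (y - x)) \<le> M * \<bar>J y - J x\<bar>"
          using b1 by (simp add: divide_le_eq abs_divide mult_ac)
      qed
    qed
    have "((\<lambda>y. F x * ((phi y - phi x) / (y - x)) + (E y - E x - F x * (phi y - phi x)) / (y - x))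
           \<longlongrightarrow> F x * phi' x + 0) (at x)"
      by (rule tendsto_add[OF lim1 lim3])
    moreover have "(\<lambda>y. F x * ((phi y - phi x) / (y - x)) + (E y - E x - F x * (phi y - phi x)) / (y - x))
        = (\<lambda>y. (E y - E x) / (y - x))"
      by (rule ext) (simp add: add_divide_distrib[symmetric] diff_divide_distrib[symmetric] algebra_simps)
    ultimately show ?thesis by (simp add: has_field_derivative_iff)
  qed
  have dD: "(D has_real_derivative 0) (at x)" if x: "a < x" "x < b" for x
  proof -
    have "((\<lambda>y. integral {a..y} Fp) has_real_derivative Fp x) (at x within {a..b})"
      using x by (intro integral_has_real_derivative Fpc) auto
    hence "((\<lambda>y. integral {a..y} Fp) has_real_derivative Fp x) (at x)"
      using x by (simp add: at_within_Icc_at)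
    from DERIV_diff[OF dE[OF x] this] show ?thesis unfolding D_def[abs_def] Fp_def by simp
  qed
  have Dc: "continuous_on {a..b} D"
    unfolding D_def[abs_def] E_def[abs_def]
    by (intro continuous_intros Fc cphi indefinite_integral_continuous_1 kpint Fpc integrable_continuous_real) auto
  have "D b = D a" by (rule DERIV_isconst_end[OF ab' Dc dD])
  hence val: "integral {a..b} kp + integral {a..b} Fp = F b * phi b - F a * phi a"
    unfolding D_def E_def by simp
  have "((\<lambda>x. kp x + Fp x) has_integral (integral {a..b} kp + integral {a..b} Fp)) {a..b}"
    using kpint[of a b] integrable_continuous_real[OF Fpc]
    by (intro has_integral_add integrable_integral) auto
  then show ?thesis unfolding val by (simp add: kp_def Fp_def mult.commute)
qed

lemma per_bound:
  fixes f :: "real \<Rightarrow> real \<Rightarrow> real"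
  assumes c: "continuous_on (UNIV \<times> {0..T}) (\<lambda>(x,t). f x t)"
    and p: "\<And>x t. t \<in> {0..T} \<Longrightarrow> f (x+1) t = f x t"
  shows "\<exists>B. \<forall>x. \<forall>t\<in>{0..T}. \<bar>f x t\<bar> \<le> B"
proof -
  have "compact ((\<lambda>(x,t). f x t) ` ({0..1} \<times> {0..T}))"
    by (intro compact_continuous_image continuous_on_subset[OF c] compact_Times) auto
  then obtain B where B: "\<And>z. z \<in> (\<lambda>(x,t). f x t) ` ({0..1} \<times> {0..T}) \<Longrightarrow> norm z \<le> B"
    using compact_imp_bounded bounded_iff by metis
  have "\<bar>f x t\<bar> \<le> B" if t: "t \<in> {0..T}" for x t
  proof -
    define x' where "x' = x - real_of_int (floor x)"
    have x': "x' \<in> {0..1}" unfolding x'_def by (auto, linarith)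
    have "f (x' + real_of_int (floor x)) t = f x' t"
      by (rule per_int[of "\<lambda>y. f y t"]) (use p t in auto)
    hence "f x t = f x' t" unfolding x'_def by simp
    then show ?thesis using B[of "f x' t"] x' t by force
  qed
  then show ?thesis by blast
qed

lemma abs_mul_le: "\<bar>a\<bar> \<le> A \<Longrightarrow> \<bar>b\<bar> \<le> B \<Longrightarrow> \<bar>(a::real) * b\<bar> \<le> A * B"
  by (simp add: abs_mult mult_mono')

lemma aux1: "\<bar>z\<bar> \<le> 1 * K \<Longrightarrow> \<bar>1 - z\<bar> \<le> 1 + (K::real)"
  by (auto simp: abs_le_iff)

locale vel =
  fixes u ux uxx :: "real \<Rightarrow> real \<Rightarrow> real" and T :: real
  assumes u_per: "\<And>x t. u (x + 1) t = u x t"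
    and u_dx: "\<And>x t. t \<in> {0..T} \<Longrightarrow> ((\<lambda>y. u y t) has_real_derivative ux x t) (at x)"
    and ux_dx: "\<And>x t. t \<in> {0..T} \<Longrightarrow> ((\<lambda>y. ux y t) has_real_derivative uxx x t) (at x)"
    and u_cont: "continuous_on (UNIV \<times> {0..T}) (\<lambda>(x, t). u x t)"
    and ux_cont: "continuous_on (UNIV \<times> {0..T}) (\<lambda>(x, t). ux x t)"
    and uxx_cont: "continuous_on (UNIV \<times> {0..T}) (\<lambda>(x, t). uxx x t)"
begin

lemma ux_per: "t \<in> {0..T} \<Longrightarrow> ux (x + 1) t = ux x t"
  by (rule deriv_periodic[of "\<lambda>y. u y t" "\<lambda>y. ux y t"]) (use u_dx u_per in auto)

lemma uxx_per: "t \<in> {0..T} \<Longrightarrow> uxx (x + 1) t = uxx x t"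
  by (rule deriv_periodic[of "\<lambda>y. ux y t" "\<lambda>y. uxx y t"]) (use ux_dx ux_per in auto)

lemma bounds: "\<exists>B\<ge>0. \<forall>x. \<forall>t\<in>{0..T}. \<bar>u x t\<bar> \<le> B \<and> \<bar>ux x t\<bar> \<le> B \<and> \<bar>uxx x t\<bar> \<le> B"
proof -
  obtain B1 where B1: "\<forall>x. \<forall>t\<in>{0..T}. \<bar>u x t\<bar> \<le> B1" using per_bound[OF u_cont] u_per by blast
  obtain B2 where B2: "\<forall>x. \<forall>t\<in>{0..T}. \<bar>ux x t\<bar> \<le> B2" using per_bound[OF ux_cont] ux_per by blast
  obtain B3 where B3: "\<forall>x. \<forall>t\<in>{0..T}. \<bar>uxx x t\<bar> \<le> B3" using per_bound[OF uxx_cont] uxx_per by blast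
  define Bm where "Bm = max 0 (max B1 (max B2 B3))"
  have h: "B1 \<le> Bm" "B2 \<le> Bm" "B3 \<le> Bm" "0 \<le> Bm" unfolding Bm_def by auto
  have "\<forall>x. \<forall>t\<in>{0..T}. \<bar>u x t\<bar> \<le> Bm \<and> \<bar>ux x t\<bar> \<le> Bm \<and> \<bar>uxx x t\<bar> \<le> Bm"
  proof (intro allI ballI conjI)
    fix x t assume t: "t \<in> {0..T}"
    show "\<bar>u x t\<bar> \<le> Bm" using B1 t h(1) by (meson order_trans)
    show "\<bar>ux x t\<bar> \<le> Bm" using B2 t h(2) by (meson order_trans)
    show "\<bar>uxx x t\<bar> \<le> Bm" using B3 t h(3) by (meson order_trans)
  qed
  then show ?thesis using h(4) by blast
qed

lemma cont_comp:
  assumes c: "continuous_on (UNIV \<times> {0..T}) (\<lambda>(x, t). f x t)" and s: "s \<in> {0..T}"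
    and P: "continuous_on UNIV P"
  shows "continuous_on UNIV (\<lambda>x. f (P x) s)"
proof -
  have "continuous_on UNIV (\<lambda>x. (\<lambda>(x, t). f x t) (P x, s))"
    by (rule continuous_on_compose2[OF c]) (use s in \<open>auto intro!: continuous_intros P\<close>)
  then show ?thesis by simp
qed

lemma chain:
  assumes s: "s \<in> {0..T}" and dP: "(P has_real_derivative D) (at x)"
  shows "((\<lambda>x. u (P x) s) has_real_derivative ux (P x) s * D) (at x)"
    and "((\<lambda>x. ux (P x) s) has_real_derivative uxx (P x) s * D) (at x)"
  using DERIV_chain2[OF u_dx[OF s] dP] DERIV_chain2[OF ux_dx[OF s] dP] by auto

lemma Xprops:
  "\<exists>E\<ge>0. \<forall>d t1. 0 < d \<longrightarrow> d \<le> 1 \<longrightarrow> 0 \<le> t1 - d \<longrightarrow> t1 \<le> T \<longrightarrow>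
     (\<exists>X1 X2. (\<forall>x. (Xmap u d t1 has_real_derivative X1 x) (at x)) \<and>
              (\<forall>x. (X1 has_real_derivative X2 x) (at x)) \<and> continuous_on UNIV X2 \<and>
              (\<forall>x. \<bar>X1 x - 1\<bar> \<le> d * E) \<and> (\<forall>x. \<bar>X2 x\<bar> \<le> d * E) \<and>
              (\<forall>x. Xmap u d t1 (x + 1) = Xmap u d t1 x + 1))"
proof -
  obtain B where B0: "B \<ge> 0" and B: "\<And>x t. t \<in> {0..T} \<Longrightarrow> \<bar>u x t\<bar> \<le> B \<and> \<bar>ux x t\<bar> \<le> B \<and> \<bar>uxx x t\<bar> \<le> B"
    using bounds by blast
  define c2 where "c2 = 1 + B"
  define a2 where "a2 = B * c2"
  define b2 where "b2 = B * c2 * c2 + B * B"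
  define c3 where "c3 = 1 + (B + 2 * a2)"
  define e3 where "e3 = B + 2 * b2"
  define a3 where "a3 = B * c3"
  define b3 where "b3 = B * c3 * c3 + B * e3"
  define E where "E = B + 4 * a2 + a3 + (B + 4 * b2 + b3)"
  have pos: "c2 \<ge> 0" "a2 \<ge> 0" "b2 \<ge> 0" "c3 \<ge> 0" "e3 \<ge> 0" "a3 \<ge> 0" "b3 \<ge> 0"
    unfolding c2_def a2_def b2_def c3_def e3_def a3_def b3_def using B0 by auto
  have E0: "E \<ge> 0" unfolding E_def using pos B0 by auto
  show ?thesis
  proof (intro exI[of _ E] conjI E0 allI impI)
    fix d t1 :: real
    assume d0: "0 < d" and d1: "d \<le> 1" and t0: "0 \<le> t1 - d" and tT: "t1 \<le> T"
    define s2 where "s2 = t1 - d / 2"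
    define s3 where "s3 = t1 - d"
    have ts: "t1 \<in> {0..T}" "s2 \<in> {0..T}" "s3 \<in> {0..T}" unfolding s2_def s3_def using d0 t0 tT by auto
    define k1 where "k1 x = u x t1" for x
    define k1' where "k1' x = ux x t1" for x
    define k1'' where "k1'' x = uxx x t1" for x
    define P2 where "P2 x = x - d / 2 * k1 x" for x
    define P2' where "P2' x = 1 - d / 2 * k1' x" for x
    define P2'' where "P2'' x = - (d / 2 * k1'' x)" for x
    define k2 where "k2 x = u (P2 x) s2" for x
    define k2' where "k2' x = ux (P2 x) s2 * P2' x" for x
    define k2'' where "k2'' x = uxx (P2 x) s2 * P2' x * P2' x + ux (P2 x) s2 * P2'' x" for x
    define P3 where "P3 x = x - d * (- k1 x + 2 * k2 x)" for x
    define P3' where "P3' x = 1 - d * (- k1' x + 2 * k2' x)" for x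
    define P3'' where "P3'' x = - (d * (- k1'' x + 2 * k2'' x))" for x
    define k3 where "k3 x = u (P3 x) s3" for x
    define k3' where "k3' x = ux (P3 x) s3 * P3' x" for x
    define k3'' where "k3'' x = uxx (P3 x) s3 * P3' x * P3' x + ux (P3 x) s3 * P3'' x" for x
    define X1 where "X1 x = 1 - d * (k1' x / 6 + 4 / 6 * k2' x + k3' x / 6)" for x
    define X2 where "X2 x = - (d * (k1'' x / 6 + 4 / 6 * k2'' x + k3'' x / 6))" for x
    have Xeq: "Xmap u d t1 = (\<lambda>x. x - d * (k1 x / 6 + 4 / 6 * k2 x + k3 x / 6))"
      by (rule ext) (simp add: Xmap_def Let_def k1_def k2_def k3_def P2_def P3_def s2_def s3_def)
    have dk1: "(k1 has_real_derivative k1' x) (at x)" for x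
      unfolding k1_def[abs_def] k1'_def using u_dx[OF ts(1)] by simp
    have dk1': "(k1' has_real_derivative k1'' x) (at x)" for x
      unfolding k1'_def[abs_def] k1''_def using ux_dx[OF ts(1)] by simp
    have dP2: "(P2 has_real_derivative P2' x) (at x)" for x
      unfolding P2_def[abs_def] P2'_def using DERIV_diff[OF DERIV_ident DERIV_cmult[OF dk1[of x], of "d/2"]] by simp
    have dP2': "(P2' has_real_derivative P2'' x) (at x)" for x
      unfolding P2'_def[abs_def] P2''_def using DERIV_diff[OF DERIV_const DERIV_cmult[OF dk1'[of x], of "d/2"], of 1] by simp
    have dk2: "(k2 has_real_derivative k2' x) (at x)" for x
      unfolding k2_def[abs_def] k2'_def using chain(1)[OF ts(2) dP2[of x]] by simp
    have dk2': "(k2' has_real_derivative k2'' x) (at x)" for x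
    proof -
      have "((\<lambda>x. ux (P2 x) s2 * P2' x) has_real_derivative
          uxx (P2 x) s2 * P2' x * P2' x + ux (P2 x) s2 * P2'' x) (at x)"
        using DERIV_mult[OF chain(2)[OF ts(2) dP2[of x]] dP2'[of x]] by (simp add: mult.commute)
      then show ?thesis unfolding k2'_def[abs_def] k2''_def .
    qed
    have dP3: "(P3 has_real_derivative P3' x) (at x)" for x
      unfolding P3_def[abs_def] P3'_def
      using DERIV_diff[OF DERIV_ident DERIV_cmult[OF DERIV_add[OF DERIV_minus[OF dk1[of x]] DERIV_cmult[OF dk2[of x], of 2]], of d]] by simp
    have dP3': "(P3' has_real_derivative P3'' x) (at x)" for x
      unfolding P3'_def[abs_def] P3''_def
      using DERIV_diff[OF DERIV_const DERIV_cmult[OF DERIV_add[OF DERIV_minus[OF dk1'[of x]] DERIV_cmult[OF dk2'[of x], of 2]], of d], of 1] by simp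
    have dk3: "(k3 has_real_derivative k3' x) (at x)" for x
      unfolding k3_def[abs_def] k3'_def using chain(1)[OF ts(3) dP3[of x]] by simp
    have dk3': "(k3' has_real_derivative k3'' x) (at x)" for x
    proof -
      have "((\<lambda>x. ux (P3 x) s3 * P3' x) has_real_derivative
          uxx (P3 x) s3 * P3' x * P3' x + ux (P3 x) s3 * P3'' x) (at x)"
        using DERIV_mult[OF chain(2)[OF ts(3) dP3[of x]] dP3'[of x]] by (simp add: mult.commute)
      then show ?thesis unfolding k3'_def[abs_def] k3''_def .
    qed
    have dX: "\<forall>x. (Xmap u d t1 has_real_derivative X1 x) (at x)"
    proof
      fix x
      show "(Xmap u d t1 has_real_derivative X1 x) (at x)"
        unfolding Xeq X1_def
        using DERIV_diff[OF DERIV_ident DERIV_cmult[OF DERIV_add[OF DERIV_add[OF DERIV_cdivide[OF dk1[of x], of 6] DERIV_cmult[OF dk2[of x], of "4/6"]] DERIV_cdivide[OF dk3[of x], of 6]], of d]] by simp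
    qed
    have dX1: "\<forall>x. (X1 has_real_derivative X2 x) (at x)"
    proof
      fix x
      show "(X1 has_real_derivative X2 x) (at x)"
        unfolding X1_def[abs_def] X2_def
        using DERIV_diff[OF DERIV_const DERIV_cmult[OF DERIV_add[OF DERIV_add[OF DERIV_cdivide[OF dk1'[of x], of 6] DERIV_cmult[OF dk2'[of x], of "4/6"]] DERIV_cdivide[OF dk3'[of x], of 6]], of d], of 1] by simp
    qed
    have cP2: "continuous_on UNIV P2" "continuous_on UNIV P2'"
      using dP2 dP2' by (meson DERIV_continuous continuous_at_imp_continuous_on)+
    have cP3: "continuous_on UNIV P3" "continuous_on UNIV P3'"
      using dP3 dP3' by (meson DERIV_continuous continuous_at_imp_continuous_on)+
    have ck1'': "continuous_on UNIV k1''"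
      unfolding k1''_def[abs_def] using cont_comp[OF uxx_cont ts(1), of "\<lambda>x. x"] by simp
    have cP2'': "continuous_on UNIV P2''" unfolding P2''_def[abs_def] by (intro continuous_intros ck1'')
    have ck2'': "continuous_on UNIV k2''"
      unfolding k2''_def[abs_def]
      by (intro continuous_intros cont_comp[OF uxx_cont ts(2)] cont_comp[OF ux_cont ts(2)] cP2 cP2'')
    have cP3'': "continuous_on UNIV P3''" unfolding P3''_def[abs_def] by (intro continuous_intros ck1'' ck2'')
    have ck3'': "continuous_on UNIV k3''"
      unfolding k3''_def[abs_def]
      by (intro continuous_intros cont_comp[OF uxx_cont ts(3)] cont_comp[OF ux_cont ts(3)] cP3 cP3'')
    have cX2: "continuous_on UNIV X2"
      unfolding X2_def[abs_def] by (intro continuous_intros ck1'' ck2'' ck3'') auto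
    have hd: "\<bar>d / 2\<bar> \<le> 1" "\<bar>d\<bar> \<le> 1" using d0 d1 by auto
    have bk1: "\<bar>k1' x\<bar> \<le> B" "\<bar>k1'' x\<bar> \<le> B" for x
      unfolding k1'_def k1''_def using B[OF ts(1)] by auto
    have bP2: "\<bar>P2' x\<bar> \<le> c2" "\<bar>P2'' x\<bar> \<le> B" for x
    proof -
      have "\<bar>d / 2 * k1' x\<bar> \<le> 1 * B" by (rule abs_mul_le[OF hd(1) bk1(1)])
      then show "\<bar>P2' x\<bar> \<le> c2" unfolding P2'_def c2_def by linarith
      have "\<bar>d / 2 * k1'' x\<bar> \<le> 1 * B" by (rule abs_mul_le[OF hd(1) bk1(2)])
      then show "\<bar>P2'' x\<bar> \<le> B" unfolding P2''_def by simp
    qed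
    have bk2: "\<bar>k2' x\<bar> \<le> a2" "\<bar>k2'' x\<bar> \<le> b2" for x
    proof -
      have u2: "\<bar>ux (P2 x) s2\<bar> \<le> B" "\<bar>uxx (P2 x) s2\<bar> \<le> B" using B[OF ts(2)] by auto
      show "\<bar>k2' x\<bar> \<le> a2" unfolding k2'_def a2_def by (rule abs_mul_le[OF u2(1) bP2(1)])
      have "\<bar>uxx (P2 x) s2 * P2' x * P2' x\<bar> \<le> B * c2 * c2"
        by (intro abs_mul_le u2 bP2)
      moreover have "\<bar>ux (P2 x) s2 * P2'' x\<bar> \<le> B * B" by (intro abs_mul_le u2 bP2)
      ultimately show "\<bar>k2'' x\<bar> \<le> b2" unfolding k2''_def b2_def by linarith
    qed
    have bP3: "\<bar>P3' x\<bar> \<le> c3" "\<bar>P3'' x\<bar> \<le> e3" for x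
    proof -
      have "\<bar>- k1' x + 2 * k2' x\<bar> \<le> B + 2 * a2" using bk1(1)[of x] bk2(1)[of x] by linarith
      hence "\<bar>d * (- k1' x + 2 * k2' x)\<bar> \<le> 1 * (B + 2 * a2)" by (rule abs_mul_le[OF hd(2)])
      then show "\<bar>P3' x\<bar> \<le> c3" unfolding P3'_def c3_def by (rule aux1)
      have "\<bar>- k1'' x + 2 * k2'' x\<bar> \<le> B + 2 * b2" using bk1(2)[of x] bk2(2)[of x] by linarith
      hence "\<bar>d * (- k1'' x + 2 * k2'' x)\<bar> \<le> 1 * (B + 2 * b2)" by (rule abs_mul_le[OF hd(2)])
      then show "\<bar>P3'' x\<bar> \<le> e3" unfolding P3''_def e3_def by simp
    qed
    have bk3: "\<bar>k3' x\<bar> \<le> a3" "\<bar>k3'' x\<bar> \<le> b3" for x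
    proof -
      have u3: "\<bar>ux (P3 x) s3\<bar> \<le> B" "\<bar>uxx (P3 x) s3\<bar> \<le> B" using B[OF ts(3)] by auto
      show "\<bar>k3' x\<bar> \<le> a3" unfolding k3'_def a3_def by (rule abs_mul_le[OF u3(1) bP3(1)])
      have "\<bar>uxx (P3 x) s3 * P3' x * P3' x\<bar> \<le> B * c3 * c3"
        by (intro abs_mul_le u3 bP3)
      moreover have "\<bar>ux (P3 x) s3 * P3'' x\<bar> \<le> B * e3" by (intro abs_mul_le u3 bP3)
      ultimately show "\<bar>k3'' x\<bar> \<le> b3" unfolding k3''_def b3_def by linarith
    qed
    have bX1: "\<forall>x. \<bar>X1 x - 1\<bar> \<le> d * E"
    proof
      fix x
      have "\<bar>k1' x / 6 + 4 / 6 * k2' x + k3' x / 6\<bar> \<le> E"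
        using bk1(1)[of x] bk2(1)[of x] bk3(1)[of x] pos B0 unfolding E_def by linarith
      hence "\<bar>d * (k1' x / 6 + 4 / 6 * k2' x + k3' x / 6)\<bar> \<le> d * E"
        using d0 by (simp add: abs_mult mult_left_mono)
      then show "\<bar>X1 x - 1\<bar> \<le> d * E" unfolding X1_def by simp
    qed
    have bX2: "\<forall>x. \<bar>X2 x\<bar> \<le> d * E"
    proof
      fix x
      have "\<bar>k1'' x / 6 + 4 / 6 * k2'' x + k3'' x / 6\<bar> \<le> E"
        using bk1(2)[of x] bk2(2)[of x] bk3(2)[of x] pos B0 unfolding E_def by linarith
      hence "\<bar>d * (k1'' x / 6 + 4 / 6 * k2'' x + k3'' x / 6)\<bar> \<le> d * E"
        using d0 by (simp add: abs_mult mult_left_mono)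
      then show "\<bar>X2 x\<bar> \<le> d * E" unfolding X2_def by simp
    qed
    have perX: "\<forall>x. Xmap u d t1 (x + 1) = Xmap u d t1 x + 1"
    proof
      fix x
      have "k1 (x + 1) = k1 x" unfolding k1_def by (simp add: u_per)
      moreover have "P2 (x + 1) = P2 x + 1" unfolding P2_def using \<open>k1 (x + 1) = k1 x\<close> by simp
      moreover have "k2 (x + 1) = k2 x" unfolding k2_def using \<open>P2 (x + 1) = P2 x + 1\<close> by (simp add: u_per)
      moreover have "P3 (x + 1) = P3 x + 1" unfolding P3_def using \<open>k1 (x + 1) = k1 x\<close> \<open>k2 (x + 1) = k2 x\<close> by simp
      moreover have "k3 (x + 1) = k3 x" unfolding k3_def using \<open>P3 (x + 1) = P3 x + 1\<close> by (simp add: u_per)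
      ultimately show "Xmap u d t1 (x + 1) = Xmap u d t1 x + 1" unfolding Xeq by simp
    qed
    show "\<exists>X1 X2. (\<forall>x. (Xmap u d t1 has_real_derivative X1 x) (at x)) \<and>
              (\<forall>x. (X1 has_real_derivative X2 x) (at x)) \<and> continuous_on UNIV X2 \<and>
              (\<forall>x. \<bar>X1 x - 1\<bar> \<le> d * E) \<and> (\<forall>x. \<bar>X2 x\<bar> \<le> d * E) \<and>
              (\<forall>x. Xmap u d t1 (x + 1) = Xmap u d t1 x + 1)"
      using dX dX1 cX2 bX1 bX2 perX by (intro exI[of _ X1] exI[of _ X2]) simp
  qed
qed

end

lemma lip_deriv:
  fixes f f' :: "real \<Rightarrow> real"
  assumes d: "\<And>x. x \<in> {a..b} \<Longrightarrow> (f has_real_derivative f' x) (at x)"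
    and bd: "\<And>x. x \<in> {a..b} \<Longrightarrow> \<bar>f' x\<bar> \<le> M"
    and x: "x \<in> {a..b}" and y: "y \<in> {a..b}"
  shows "\<bar>f x - f y\<bar> \<le> M * \<bar>x - y\<bar>"
proof -
  have main: "\<bar>f q - f p\<bar> \<le> M * (q - p)" if pq: "p < q" "p \<in> {a..b}" "q \<in> {a..b}" for p q
  proof -
    obtain z where z: "p < z" "z < q" "f q - f p = (q - p) * f' z"
      using MVT2[OF pq(1), of f f'] d pq by force
    have "z \<in> {a..b}" using z pq by auto
    then have "\<bar>f' z\<bar> \<le> M" by (rule bd)
    then have "\<bar>(q - p) * f' z\<bar> \<le> (q - p) * M" using pq by (simp add: abs_mult mult_left_mono)
    then show ?thesis using z by (simp add: mult.commute)
  qed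
  consider "x < y" | "x = y" | "y < x" by linarith
  then show ?thesis
  proof cases
    case 1 then show ?thesis using main[OF 1 x y] by (simp add: abs_minus_commute)
  next
    case 3 then show ?thesis using main[OF 3 y x] by simp
  qed simp
qed

lemma incr:
  fixes X X1 :: "real \<Rightarrow> real"
  assumes dX: "\<And>x. (X has_real_derivative X1 x) (at x)" and pos: "\<And>x. X1 x > 0"
  shows "strict_mono X"
proof (rule strict_monoI)
  fix a b :: real assume "a < b"
  then show "X a < X b" by (rule DERIV_pos_imp_increasing) (use dX pos in blast)
qed

lemma img:
  fixes X X1 :: "real \<Rightarrow> real"
  assumes dX: "\<And>x. (X has_real_derivative X1 x) (at x)" and pos: "\<And>x. X1 x > 0" and ab: "a \<le> b"
  shows "X ` {a..b} = {X a..X b}"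
proof
  have sm: "strict_mono X" by (rule incr[OF dX pos])
  show "X ` {a..b} \<subseteq> {X a..X b}" using sm by (auto simp: strict_mono_less_eq)
  show "{X a..X b} \<subseteq> X ` {a..b}"
  proof
    fix y assume y: "y \<in> {X a..X b}"
    have c: "continuous_on {a..b} X" using dX by (meson DERIV_continuous continuous_at_imp_continuous_on)
    obtain x where "a \<le> x" "x \<le> b" "X x = y" using IVT'[of X a y b, OF _ _ ab c] y by auto
    then show "y \<in> X ` {a..b}" by auto
  qed
qed

lemma cov:
  fixes X X1 f :: "real \<Rightarrow> real"
  assumes dX: "\<And>x. (X has_real_derivative X1 x) (at x)" and pos: "\<And>x. X1 x > 0" and ab: "a \<le> b"
    and f: "f absolutely_integrable_on {X a..X b}"
  shows "(\<lambda>x. X1 x * f (X x)) absolutely_integrable_on {a..b}"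
    and "integral {a..b} (\<lambda>x. X1 x * f (X x)) = integral {X a..X b} f"
proof -
  have im: "X ` {a..b} = {X a..X b}" by (rule img[OF dX pos ab])
  have inj: "inj_on X {a..b}" using incr[OF dX pos] strict_mono_on_imp_inj_on
    by (metis strict_mono_imp_inj_on)
  have dw: "\<And>x. x \<in> {a..b} \<Longrightarrow> (X has_field_derivative X1 x) (at x within {a..b})"
    using dX has_field_derivative_at_within by blast
  have "(\<lambda>x. \<bar>X1 x\<bar> * f (X x)) absolutely_integrable_on {a..b} \<and>
           integral {a..b} (\<lambda>x. \<bar>X1 x\<bar> * f (X x)) = integral {X a..X b} f
     \<longleftrightarrow> f absolutely_integrable_on (X ` {a..b}) \<and> integral (X ` {a..b}) f = integral {X a..X b} f"
    by (rule has_absolute_integral_change_of_variables_1'[OF _ dw inj]) auto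
  moreover have "\<bar>X1 x\<bar> = X1 x" for x using pos[of x] by simp
  ultimately show "(\<lambda>x. X1 x * f (X x)) absolutely_integrable_on {a..b}"
    and "integral {a..b} (\<lambda>x. X1 x * f (X x)) = integral {X a..X b} f"
    using f im by auto
qed

lemma sq_split: "(d::real) > 0 \<Longrightarrow> (p + q)\<^sup>2 \<le> (1 + d) * p\<^sup>2 + (1 + 1 / d) * q\<^sup>2"
proof -
  assume d: "d > 0"
  have "0 \<le> (d * p - q)\<^sup>2 / d" using d by simp
  also have "(d * p - q)\<^sup>2 / d = d * p\<^sup>2 - 2 * p * q + q\<^sup>2 / d"
    using d by (simp add: power2_eq_square field_simps)
  finally have "2 * p * q \<le> d * p\<^sup>2 + q\<^sup>2 / d" by simp
  then show ?thesis by (simp add: power2_eq_square algebra_simps)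
qed

lemma int_nonneg: "(\<And>x. x \<in> S \<Longrightarrow> 0 \<le> f x) \<Longrightarrow> 0 \<le> integral S (f :: 'a::euclidean_space \<Rightarrow> real)"
  by (cases "f integrable_on S") (auto intro: integral_nonneg simp: not_integrable_integral)

lemma cont_UNIV_of_intervals:
  assumes "\<And>a b. continuous_on {a..b} f" shows "continuous_on UNIV (f :: real \<Rightarrow> real)"
proof -
  have "isCont f x" for x
    by (rule continuous_on_interior[OF assms[of "x - 1" "x + 1"]]) auto
  then show ?thesis by (simp add: continuous_at_imp_continuous_on)
qed

locale Xsetup =
  fixes X X1 X2 :: "real \<Rightarrow> real" and d E :: real
  assumes dX: "\<And>x. (X has_real_derivative X1 x) (at x)"
    and dX1: "\<And>x. (X1 has_real_derivative X2 x) (at x)"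
    and cX2: "continuous_on UNIV X2"
    and b1: "\<And>x. \<bar>X1 x - 1\<bar> \<le> d * E"
    and b2: "\<And>x. \<bar>X2 x\<bar> \<le> d * E"
    and per: "\<And>x. X (x + 1) = X x + 1"
    and d0: "0 < d" and d1: "d \<le> 1" and E0: "0 \<le> E" and dE: "d * E \<le> 1 / 2"
begin

lemma X1lo: "X1 x \<ge> 1 / 2" using b1[of x] dE by (auto simp: abs_le_iff)
lemma X1pos: "X1 x > 0" using X1lo[of x] by simp
lemma X1hi: "X1 x \<le> 1 + d * E" using b1[of x] by (auto simp: abs_le_iff)
lemma cX: "continuous_on UNIV X" using dX by (meson DERIV_continuous continuous_at_imp_continuous_on)
lemma cX1: "continuous_on UNIV X1" using dX1 by (meson DERIV_continuous continuous_at_imp_continuous_on)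

lemma pull:
  fixes f :: "real \<Rightarrow> real"
  assumes pf: "\<And>y. f (y + 1) = f y" and fi: "f integrable_on {0..1}" and fa: "(\<lambda>y. \<bar>f y\<bar>) integrable_on {0..1}"
  shows "(\<lambda>x. X1 x * f (X x)) absolutely_integrable_on {0..1}"
    and "integral {0..1} (\<lambda>x. X1 x * f (X x)) = integral {0..1} f"
proof -
  have X01: "X 1 = X 0 + 1" using per[of 0] by simp
  have "f integrable_on {X 0..X 1}" by (rule per_integrable[OF pf fi])
  moreover have "(\<lambda>y. \<bar>f y\<bar>) integrable_on {X 0..X 1}" by (rule per_integrable[OF _ fa]) (simp add: pf)
  ultimately have fab: "f absolutely_integrable_on {X 0..X 1}" by (rule abs_absolutely_integrableI_1)
  show "(\<lambda>x. X1 x * f (X x)) absolutely_integrable_on {0..1}"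
    by (rule cov(1)[OF dX X1pos _ fab]) simp
  have "integral {0..1} (\<lambda>x. X1 x * f (X x)) = integral {X 0..X 1} f"
    by (rule cov(2)[OF dX X1pos _ fab]) simp
  also have "\<dots> = integral {0..1} f" unfolding X01 by (rule per_integral[OF pf fi])
  finally show "integral {0..1} (\<lambda>x. X1 x * f (X x)) = integral {0..1} f" .
qed

lemma est:
  assumes H: "H2_per g"
  shows "H2_per (g \<circ> X)"
    and "integral {0..1} (\<lambda>x. ((g \<circ> X) x)\<^sup>2) \<le> (1 + 2 * d * E) * integral {0..1} (\<lambda>x. (g x)\<^sup>2)"
    and "integral {0..1} (\<lambda>x. (d2 (g \<circ> X) x)\<^sup>2) \<le>
           (1 + d) * (1 + d * E) ^ 3 * integral {0..1} (\<lambda>x. (d2 g x)\<^sup>2)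
           + 2 * d * E\<^sup>2 * (integral {0..1} (\<lambda>x. (g x)\<^sup>2) + integral {0..1} (\<lambda>x. (d2 g x)\<^sup>2))"
proof -
  obtain g1 G2 where w: "wk g g1 G2" and pg: "\<And>x. g (x+1) = g x" and p1: "\<And>x. g1 (x+1) = g1 x"
    and pG: "\<And>x. G2 (x+1) = G2 x"
    and Gabs: "\<And>a b. G2 absolutely_integrable_on {a..b}" and sqint: "\<And>a b. (\<lambda>x. (G2 x)\<^sup>2) integrable_on {a..b}"
    and eqB: "integral {0..1} (\<lambda>x. (G2 x)\<^sup>2) = integral {0..1} (\<lambda>x. (d2 g x)\<^sup>2)"
    and cg1': "\<And>a b. continuous_on {a..b} g1"
    using gpack[OF H] by blast
  have gd: "\<And>x. (g has_real_derivative g1 x) (at x)"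
    and gi: "\<And>a b. a \<le> b \<Longrightarrow> (G2 has_integral (g1 b - g1 a)) {a..b}"
    using w unfolding wk_def by auto
  have cg: "continuous_on UNIV g" using gd by (meson DERIV_continuous continuous_at_imp_continuous_on)
  have cg1: "continuous_on UNIV g1" by (rule cont_UNIV_of_intervals[OF cg1'])
  have cgX: "continuous_on UNIV (\<lambda>x. g (X x))" by (rule continuous_on_compose2[OF cg cX]) auto
  have cg1X: "continuous_on UNIV (\<lambda>x. g1 (X x))" by (rule continuous_on_compose2[OF cg1 cX]) auto
  define A where "A = integral {0..1} (\<lambda>x. (g x)\<^sup>2)"
  define B where "B = integral {0..1} (\<lambda>x. (G2 x)\<^sup>2)"
  have A0: "A \<ge> 0" unfolding A_def by (rule int_nonneg) auto
  have B0: "B \<ge> 0" unfolding B_def by (rule int_nonneg) auto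
  have L2: "integral {0..1} (\<lambda>x. ((g \<circ> X) x)\<^sup>2) \<le> (1 + 2 * d * E) * A"
  proof -
    have cg2: "continuous_on UNIV (\<lambda>y. (g y)\<^sup>2)" by (intro continuous_intros cg)
    have pl: "(\<lambda>x. X1 x * (g (X x))\<^sup>2) absolutely_integrable_on {0..1}"
      "integral {0..1} (\<lambda>x. X1 x * (g (X x))\<^sup>2) = A"
    proof -
      have i1: "(\<lambda>y. (g y)\<^sup>2) integrable_on {0..1}"
        by (rule integrable_continuous_real[OF continuous_on_subset[OF cg2]]) auto
      have i2: "(\<lambda>y. \<bar>(g y)\<^sup>2\<bar>) integrable_on {0..1}" using i1 by simp
      show "(\<lambda>x. X1 x * (g (X x))\<^sup>2) absolutely_integrable_on {0..1}"
        "integral {0..1} (\<lambda>x. X1 x * (g (X x))\<^sup>2) = A"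
        using pull[of "\<lambda>y. (g y)\<^sup>2", OF _ i1 i2] pg unfolding A_def by auto
    qed
    have "integral {0..1} (\<lambda>x. ((g \<circ> X) x)\<^sup>2) \<le> integral {0..1} (\<lambda>x. (1 + 2 * d * E) * (X1 x * (g (X x))\<^sup>2))"
    proof (rule integral_le)
      have "continuous_on UNIV (\<lambda>x. (g (X x))\<^sup>2)" using cgX by (rule continuous_on_power)
      then show "(\<lambda>x. ((g \<circ> X) x)\<^sup>2) integrable_on {0..1}"
        by (auto simp: o_def intro!: integrable_continuous_real elim: continuous_on_subset)
      show "(\<lambda>x. (1 + 2 * d * E) * (X1 x * (g (X x))\<^sup>2)) integrable_on {0..1}"
        using pl(1) by (intro cmul_int) (simp add: absolutely_integrable_on_def)
      fix x
      have "(1 + 2 * d * E) * (1 - d * E) \<le> (1 + 2 * d * E) * X1 x"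
        using b1[of x] d0 E0 by (intro mult_left_mono) (auto simp: abs_le_iff)
      moreover have "1 \<le> (1 + 2 * d * E) * (1 - d * E)"
      proof -
        have "0 \<le> (d * E) * (1 - 2 * (d * E))" using d0 E0 dE by (intro mult_nonneg_nonneg) auto
        then show ?thesis by (simp add: algebra_simps)
      qed
      ultimately have "1 \<le> (1 + 2 * d * E) * X1 x" by linarith
      hence "1 * (g (X x))\<^sup>2 \<le> ((1 + 2 * d * E) * X1 x) * (g (X x))\<^sup>2"
        by (intro mult_right_mono) auto
      then show "((g \<circ> X) x)\<^sup>2 \<le> (1 + 2 * d * E) * (X1 x * (g (X x))\<^sup>2)" by (simp add: mult_ac)
    qed
    also have "\<dots> = (1 + 2 * d * E) * A" using pl(2) by simp
    finally show ?thesis .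
  qed
  show "integral {0..1} (\<lambda>x. ((g \<circ> X) x)\<^sup>2) \<le> (1 + 2 * d * E) * integral {0..1} (\<lambda>x. (g x)\<^sup>2)"
    using L2 unfolding A_def .
  have dgX: "((g \<circ> X) has_real_derivative g1 (X x) * X1 x) (at x)" for x
    by (rule DERIV_chain[OF gd dX])
  define k where "k x = X1 x * G2 (X x)" for x
  have kabs: "k absolutely_integrable_on {a..b}" if ab: "a \<le> b" for a b
    unfolding k_def by (rule cov(1)[OF dX X1pos ab Gabs])
  have kint: "(k has_integral (g1 (X b) - g1 (X a))) {a..b}" if ab: "a \<le> b" for a b
  proof -
    have "X a \<le> X b" using incr[OF dX X1pos] ab by (simp add: strict_mono_less_eq)
    hence "integral {X a..X b} G2 = g1 (X b) - g1 (X a)" using gi by (simp add: integral_unique)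
    moreover have "integral {a..b} k = integral {X a..X b} G2"
      unfolding k_def by (rule cov(2)[OF dX X1pos ab Gabs])
    moreover have "k integrable_on {a..b}" using kabs[OF ab] by (simp add: absolutely_integrable_on_def)
    ultimately show ?thesis by (metis has_integral_integrable_integral)
  qed
  define w where "w x = k x * X1 x + g1 (X x) * X2 x" for x
  have lipX1: "\<bar>X1 x - X1 y\<bar> \<le> (d * E) * \<bar>x - y\<bar>" for x y
    by (rule lip_deriv[where a = "min x y" and b = "max x y" and f' = X2]) (use dX1 b2 in auto)
  have wint: "(w has_integral (g1 (X b) * X1 b - g1 (X a) * X1 a)) {a..b}" if ab: "a \<le> b" for a b
    unfolding w_def
  proof (rule ibp[OF ab _ kabs[OF ab]])
    show "(k has_integral g1 (X y) - g1 (X x)) {x..y}" if "a \<le> x" "x \<le> y" "y \<le> b" for x y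
      using kint that by simp
    show "(X1 has_real_derivative X2 x) (at x)" for x by (rule dX1)
    show "continuous_on {a..b} X2" using cX2 by (rule continuous_on_subset) auto
    show "\<bar>X1 x - X1 y\<bar> \<le> d * E * \<bar>x - y\<bar>" for x y by (rule lipX1)
  qed
  have wd: "weak_d2 (g \<circ> X) w"
    unfolding weak_d2_def
  proof (intro exI[of _ "\<lambda>x. g1 (X x) * X1 x"] conjI allI impI)
    show "((g \<circ> X) has_real_derivative g1 (X x) * X1 x) (at x)" for x by (rule dgX)
    fix a b :: real assume ab: "a \<le> b"
    show "w integrable_on {a..b}" using wint[OF ab] by blast
    show "g1 (X b) * X1 b - g1 (X a) * X1 a = integral {a..b} w" using wint[OF ab] by (simp add: integral_unique)
  qed
  define h where "h x = X1 x * (G2 (X x))\<^sup>2" for x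
  define q where "q x = g1 (X x) * X2 x" for x
  have G2sq_abs: "(\<lambda>y. (G2 y)\<^sup>2) integrable_on {0..1}" "(\<lambda>y. \<bar>(G2 y)\<^sup>2\<bar>) integrable_on {0..1}"
    using sqint[of 0 1] by auto
  have hp: "h absolutely_integrable_on {0..1}" "integral {0..1} h = B"
    using pull[of "\<lambda>y. (G2 y)\<^sup>2", OF _ G2sq_abs] pG unfolding h_def B_def by auto
  have cq: "continuous_on UNIV q" unfolding q_def by (intro continuous_intros cg1X cX2)
  have t1: "(\<lambda>x. (X1 x) ^ 3 * h x) absolutely_integrable_on {0..1}"
    by (rule absmul[OF hp(1)]) (intro continuous_intros continuous_on_subset[OF cX1], auto)
  have t2: "(\<lambda>x. (2 * X1 x * q x) * k x) absolutely_integrable_on {0..1}"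
    by (rule absmul[OF kabs]) (auto intro!: continuous_intros continuous_on_subset[OF cX1] continuous_on_subset[OF cq])
  have t3: "(\<lambda>x. (q x)\<^sup>2) integrable_on {0..1}"
    by (rule integrable_continuous_real) (auto intro!: continuous_intros continuous_on_subset[OF cq])
  have wsq: "(w x)\<^sup>2 = (X1 x) ^ 3 * h x + (2 * X1 x * q x) * k x + (q x)\<^sup>2" for x
    unfolding w_def h_def q_def k_def by (simp add: power2_eq_square power3_eq_cube algebra_simps)
  have w2int: "(\<lambda>x. (w x)\<^sup>2) integrable_on {0..1}"
  proof -
    have "(\<lambda>x. (X1 x) ^ 3 * h x + (2 * X1 x * q x) * k x + (q x)\<^sup>2) integrable_on {0..1}"
      using t1 t2 t3 by (intro integrable_add) (auto simp: absolutely_integrable_on_def)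
    then show ?thesis by (simp add: wsq)
  qed
  have pgX: "periodic1 (g \<circ> X)" unfolding periodic1_def by (simp add: per pg)
  have exw: "\<exists>g2. weak_d2 (g \<circ> X) g2 \<and> (\<lambda>x. (g2 x)\<^sup>2) integrable_on {0..1}"
    using wd w2int by blast
  show "H2_per (g \<circ> X)" unfolding H2_per_def using pgX exw by blast
  define w' where "w' = d2 (g \<circ> X)"
  have w': "weak_d2 (g \<circ> X) w'" "(\<lambda>x. (w' x)\<^sup>2) integrable_on {0..1}"
    using someI_ex[OF exw] unfolding w'_def d2_def by blast+
  obtain g1' where wk': "wk (g \<circ> X) g1' w'" using weak_d2_wk[OF w'(1)] .
  have g1'eq: "g1' x = g1 (X x) * X1 x" for x
    using wk' dgX unfolding wk_def by (meson DERIV_unique)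
  have w'int: "a \<le> b \<Longrightarrow> (w' has_integral (g1 (X b) * X1 b - g1 (X a) * X1 a)) {a..b}" for a b
    using wk' unfolding wk_def g1'eq by blast
  have neg: "negligible {x. w' x - w x \<noteq> 0}"
  proof (rule ae_zero)
    show "(\<lambda>x. w' x - w x) integrable_on {a..b}" for a b
    proof (cases "a \<le> b")
      case True then show ?thesis using w'int[OF True] wint[OF True] by (intro integrable_diff) blast+
    next
      case False then show ?thesis by (simp add: integrable_on_empty)
    qed
    show "integral {a..b} (\<lambda>x. w' x - w x) = 0" if "a \<le> b" for a b
      using has_integral_diff[OF w'int[OF that] wint[OF that]] by (simp add: integral_unique)
  qed
  have eqw: "integral {0..1} (\<lambda>x. (w' x)\<^sup>2) = integral {0..1} (\<lambda>x. (w x)\<^sup>2)"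
    by (rule integral_spike[OF neg]) auto
  define G where "G = integral {0..1} (\<lambda>x. (g1 x)\<^sup>2)"
  have G_le: "G \<le> (A + B) / 2"
  proof -
    obtain M where M: "\<And>x. x \<in> {0..1} \<Longrightarrow> norm (g1 x) \<le> M"
    proof -
      have "bounded (g1 ` {0..1})"
        using compact_imp_bounded[OF compact_continuous_image[OF continuous_on_subset[OF cg1], of "{0..1}"]] by auto
      then obtain M where "\<forall>z\<in>g1 ` {0..1}. norm z \<le> M" unfolding bounded_iff by blast
      then show ?thesis using that by blast
    qed
    have ib: "((\<lambda>x. G2 x * g x + g1 x * g1 x) has_integral (g1 1 * g 1 - g1 0 * g 0)) {0..1}"
    proof (rule ibp)
      show "(G2 has_integral g1 y - g1 x) {x..y}" if "0 \<le> x" "x \<le> y" "y \<le> 1" for x y using gi that by simp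
      show "G2 absolutely_integrable_on {0..1}" by (rule Gabs)
      show "(g has_real_derivative g1 x) (at x)" for x by (rule gd)
      show "continuous_on {0..1} g1" by (rule cg1')
      show "\<bar>g x - g y\<bar> \<le> M * \<bar>x - y\<bar>" if "x \<in> {0..1}" "y \<in> {0..1}" for x y
        by (rule lip_deriv[OF _ _ that]) (use gd M in auto)
    qed simp
    have "g 1 = g 0" "g1 1 = g1 0" using pg[of 0] p1[of 0] by auto
    hence ib0: "((\<lambda>x. G2 x * g x + g1 x * g1 x) has_integral 0) {0..1}" using ib by simp
    have i11: "(\<lambda>x. g1 x * g1 x) integrable_on {0..1}"
      by (rule integrable_continuous_real) (auto intro!: continuous_intros continuous_on_subset[OF cg1])
    have i12: "(\<lambda>x. G2 x * g x) integrable_on {0..1}"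
    proof -
      have "(\<lambda>x. (G2 x * g x + g1 x * g1 x) - g1 x * g1 x) integrable_on {0..1}"
        using ib0 i11 by (intro integrable_diff) blast+
      then show ?thesis by simp
    qed
    have "G = integral {0..1} (\<lambda>x. g1 x * g1 x)" unfolding G_def by (simp add: power2_eq_square)
    also have "\<dots> = - integral {0..1} (\<lambda>x. G2 x * g x)"
    proof -
      have "integral {0..1} (\<lambda>x. G2 x * g x + g1 x * g1 x) = 0" using ib0 by (simp add: integral_unique)
      moreover have "integral {0..1} (\<lambda>x. G2 x * g x + g1 x * g1 x)
          = integral {0..1} (\<lambda>x. G2 x * g x) + integral {0..1} (\<lambda>x. g1 x * g1 x)"
        by (rule Henstock_Kurzweil_Integration.integral_add[OF i12 i11])
      ultimately show ?thesis by simp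
    qed
    also have "\<dots> = integral {0..1} (\<lambda>x. - (G2 x * g x))" by (simp add: integral_neg)
    also have "\<dots> \<le> integral {0..1} (\<lambda>x. ((G2 x)\<^sup>2 + (g x)\<^sup>2) / 2)"
    proof (rule integral_le)
      show "(\<lambda>x. - (G2 x * g x)) integrable_on {0..1}" using i12 by (rule integrable_neg)
      have "(\<lambda>y. (g y)\<^sup>2) integrable_on {0..1}"
        by (rule integrable_continuous_real) (auto intro!: continuous_intros continuous_on_subset[OF cg])
      then show "(\<lambda>x. ((G2 x)\<^sup>2 + (g x)\<^sup>2) / 2) integrable_on {0..1}"
      proof -
        assume gg: "(\<lambda>y. (g y)\<^sup>2) integrable_on {0..1}"
        have "(\<lambda>x. (G2 x)\<^sup>2 + (g x)\<^sup>2) integrable_on {0..1}" using sqint[of 0 1] gg by (rule integrable_add)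
        then show ?thesis by simp
      qed
      fix x
      have "0 \<le> (G2 x + g x)\<^sup>2" by simp
      then show "- (G2 x * g x) \<le> ((G2 x)\<^sup>2 + (g x)\<^sup>2) / 2" by (simp add: power2_eq_square algebra_simps)
    qed
    also have "\<dots> = (B + A) / 2"
    proof -
      have "(\<lambda>y. (g y)\<^sup>2) integrable_on {0..1}"
        by (rule integrable_continuous_real) (auto intro!: continuous_intros continuous_on_subset[OF cg])
      then show ?thesis unfolding A_def B_def
        using sqint[of 0 1] by (simp add: Henstock_Kurzweil_Integration.integral_add integral_divide)
    qed
    finally show ?thesis by simp
  qed
  have pq: "(\<lambda>x. (1 + d) * ((X1 x) ^ 3 * h x) + (1 + 1 / d) * (q x)\<^sup>2) integrable_on {0..1}"
    using t1 t3 by (intro integrable_add cmul_int) (auto simp: absolutely_integrable_on_def)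
  have "integral {0..1} (\<lambda>x. (w x)\<^sup>2) \<le> integral {0..1} (\<lambda>x. (1 + d) * ((X1 x) ^ 3 * h x) + (1 + 1 / d) * (q x)\<^sup>2)"
  proof (rule integral_le[OF w2int pq])
    fix x
    have "(w x)\<^sup>2 = (X1 x * X1 x * G2 (X x) + q x)\<^sup>2" unfolding w_def k_def q_def by (simp add: mult_ac)
    also have "\<dots> \<le> (1 + d) * (X1 x * X1 x * G2 (X x))\<^sup>2 + (1 + 1 / d) * (q x)\<^sup>2" by (rule sq_split[OF d0])
    also have "(X1 x * X1 x * G2 (X x))\<^sup>2 = (X1 x) ^ 3 * h x" unfolding h_def
      by (simp add: power2_eq_square power3_eq_cube mult_ac)
    finally show "(w x)\<^sup>2 \<le> (1 + d) * ((X1 x) ^ 3 * h x) + (1 + 1 / d) * (q x)\<^sup>2" .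
  qed
  also have "\<dots> = (1 + d) * integral {0..1} (\<lambda>x. (X1 x) ^ 3 * h x) + (1 + 1 / d) * integral {0..1} (\<lambda>x. (q x)\<^sup>2)"
    using t1 t3 by (simp add: Henstock_Kurzweil_Integration.integral_add cmul_int absolutely_integrable_on_def integral_mult_right)
  also have "integral {0..1} (\<lambda>x. (X1 x) ^ 3 * h x) \<le> (1 + d * E) ^ 3 * B"
  proof -
    have "integral {0..1} (\<lambda>x. (X1 x) ^ 3 * h x) \<le> integral {0..1} (\<lambda>x. (1 + d * E) ^ 3 * h x)"
    proof (rule integral_le)
      show "(\<lambda>x. (X1 x) ^ 3 * h x) integrable_on {0..1}" using t1 by (simp add: absolutely_integrable_on_def)
      show "(\<lambda>x. (1 + d * E) ^ 3 * h x) integrable_on {0..1}" using hp(1) by (intro cmul_int) (simp add: absolutely_integrable_on_def)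
      fix x
      have "(X1 x) ^ 3 \<le> (1 + d * E) ^ 3" using X1hi[of x] X1pos[of x] by (intro power_mono) auto
      moreover have "h x \<ge> 0" unfolding h_def using X1pos[of x] by simp
      ultimately show "(X1 x) ^ 3 * h x \<le> (1 + d * E) ^ 3 * h x" by (rule mult_right_mono)
    qed
    also have "\<dots> = (1 + d * E) ^ 3 * B" using hp(2) by (simp add: integral_mult_right)
    finally show ?thesis .
  qed
  also have "integral {0..1} (\<lambda>x. (q x)\<^sup>2) \<le> 2 * (d * E)\<^sup>2 * G"
  proof -
    have pl: "(\<lambda>x. X1 x * (g1 (X x))\<^sup>2) absolutely_integrable_on {0..1}"
      "integral {0..1} (\<lambda>x. X1 x * (g1 (X x))\<^sup>2) = G"
    proof -
      have i1: "(\<lambda>y. (g1 y)\<^sup>2) integrable_on {0..1}"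
        by (rule integrable_continuous_real) (auto intro!: continuous_intros continuous_on_subset[OF cg1])
      have i2: "(\<lambda>y. \<bar>(g1 y)\<^sup>2\<bar>) integrable_on {0..1}" using i1 by simp
      show "(\<lambda>x. X1 x * (g1 (X x))\<^sup>2) absolutely_integrable_on {0..1}"
        "integral {0..1} (\<lambda>x. X1 x * (g1 (X x))\<^sup>2) = G"
        using pull[of "\<lambda>y. (g1 y)\<^sup>2", OF _ i1 i2] p1 unfolding G_def by auto
    qed
    have "integral {0..1} (\<lambda>x. (q x)\<^sup>2) \<le> integral {0..1} (\<lambda>x. 2 * (d * E)\<^sup>2 * (X1 x * (g1 (X x))\<^sup>2))"
    proof (rule integral_le[OF t3])
      show "(\<lambda>x. 2 * (d * E)\<^sup>2 * (X1 x * (g1 (X x))\<^sup>2)) integrable_on {0..1}"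
        using pl(1) by (intro cmul_int) (simp add: absolutely_integrable_on_def)
      fix x
      have "\<bar>X2 x\<bar>\<^sup>2 \<le> (d * E)\<^sup>2" by (rule power_mono[OF b2 abs_ge_zero])
      hence "(X2 x)\<^sup>2 \<le> (d * E)\<^sup>2" by simp
      also have "\<dots> \<le> (d * E)\<^sup>2 * (2 * X1 x)" using X1lo[of x] mult_left_mono[of 1 "2 * X1 x" "(d * E)\<^sup>2"] by simp
      finally have "(g1 (X x))\<^sup>2 * (X2 x)\<^sup>2 \<le> (g1 (X x))\<^sup>2 * ((d * E)\<^sup>2 * (2 * X1 x))"
        by (intro mult_left_mono) auto
      then show "(q x)\<^sup>2 \<le> 2 * (d * E)\<^sup>2 * (X1 x * (g1 (X x))\<^sup>2)"
        unfolding q_def by (simp add: power_mult_distrib mult_ac)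
    qed
    also have "\<dots> = 2 * (d * E)\<^sup>2 * G" using pl(2) by (simp add: integral_mult_right)
    finally show ?thesis .
  qed
  finally have Wb: "integral {0..1} (\<lambda>x. (w x)\<^sup>2) \<le> (1 + d) * ((1 + d * E) ^ 3 * B) + (1 + 1 / d) * (2 * (d * E)\<^sup>2 * G)"
    using d0 by (simp add: mult_left_mono)
  have G0: "G \<ge> 0" unfolding G_def by (rule int_nonneg) auto
  have "(1 + 1 / d) * (2 * (d * E)\<^sup>2 * G) = 2 * E\<^sup>2 * (d + d * d) * G"
    using d0 by (simp add: field_simps power2_eq_square)
  also have "\<dots> \<le> 2 * E\<^sup>2 * (2 * d) * G"
    using d0 d1 G0 by (intro mult_right_mono mult_left_mono) auto
  also have "\<dots> \<le> 2 * E\<^sup>2 * (2 * d) * ((A + B) / 2)"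
    using G_le d0 by (intro mult_left_mono) auto
  also have "\<dots> = 2 * d * E\<^sup>2 * (A + B)" by (simp add: field_simps)
  finally have "(1 + 1 / d) * (2 * (d * E)\<^sup>2 * G) \<le> 2 * d * E\<^sup>2 * (A + B)" .
  with Wb have "integral {0..1} (\<lambda>x. (w x)\<^sup>2) \<le> (1 + d) * ((1 + d * E) ^ 3 * B) + 2 * d * E\<^sup>2 * (A + B)"
    by linarith
  then have "integral {0..1} (\<lambda>x. (w x)\<^sup>2) \<le> (1 + d) * (1 + d * E) ^ 3 * B + 2 * d * E\<^sup>2 * (A + B)"
    by (simp only: mult.assoc)
  then show "integral {0..1} (\<lambda>x. (d2 (g \<circ> X) x)\<^sup>2) \<le>
           (1 + d) * (1 + d * E) ^ 3 * integral {0..1} (\<lambda>x. (d2 g x)\<^sup>2)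
           + 2 * d * E\<^sup>2 * (integral {0..1} (\<lambda>x. (g x)\<^sup>2) + integral {0..1} (\<lambda>x. (d2 g x)\<^sup>2))"
    using eqw eqB unfolding w'_def A_def B_def by simp
qed

end

lemma arith_final:
  fixes A B A' B' r d E C1 :: real
  assumes A: "A \<ge> 0" and B: "B \<ge> 0" and r0: "r \<ge> 0" and r1: "r \<le> C1"
    and d0: "0 < d" and d1: "d \<le> 1" and E0: "E \<ge> 0" and dE: "d * E \<le> 1 / 2"
    and hA: "A' \<le> (1 + 2 * d * E) * A"
    and hB: "B' \<le> (1 + d) * (1 + d * E) ^ 3 * B + 2 * d * E\<^sup>2 * (A + B)"
  shows "A' + r * B' \<le> (1 + (1 + 12 * E + 2 * E\<^sup>2 + 2 * E\<^sup>2 * C1) * d)\<^sup>2 * (A + r * B)"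
proof -
  define y where "y = d * E"
  have y0: "y \<ge> 0" and y1: "y \<le> 1/2" using d0 E0 dE unfolding y_def by auto
  have yy: "y * y \<le> y / 2" using mult_left_mono[OF y1 y0] by simp
  have yyy: "y * y * y \<le> y / 4"
  proof -
    have "y * y * y \<le> (y / 2) * y" using mult_right_mono[OF yy y0] .
    also have "\<dots> \<le> (y / 2) * (1/2)" using y1 y0 by (intro mult_left_mono) auto
    finally show ?thesis by simp
  qed
  have c3: "(1 + y) ^ 3 \<le> 1 + 5 * y"
  proof -
    have "(1 + y) ^ 3 = 1 + 3 * y + 3 * (y * y) + y * y * y" by (simp add: power3_eq_cube algebra_simps)
    then show ?thesis using yy yyy y0 by linarith
  qed
  have c1: "(1 + d) * (1 + y) ^ 3 \<le> 1 + d * (1 + 10 * E)"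
  proof -
    have "(1 + d) * (1 + y) ^ 3 \<le> (1 + d) * (1 + 5 * y)" using c3 d0 by (intro mult_left_mono) auto
    also have "\<dots> = 1 + d + 5 * y + 5 * (d * y)" by (simp add: algebra_simps)
    also have "d * y \<le> y" using mult_right_mono[OF d1 y0] by simp
    hence "1 + d + 5 * y + 5 * (d * y) \<le> 1 + d + 10 * y" by linarith
    also have "\<dots> = 1 + d * (1 + 10 * E)" unfolding y_def by (simp add: algebra_simps)
    finally show ?thesis .
  qed
  define K where "K = 1 + 12 * E + 2 * E\<^sup>2 + 2 * E\<^sup>2 * C1"
  have C10: "C1 \<ge> 0" using r0 r1 by simp
  have K0: "K \<ge> 0" unfolding K_def using E0 C10 by auto
  have hB': "B' \<le> (1 + d * (1 + 10 * E)) * B + 2 * d * E\<^sup>2 * A + 2 * d * E\<^sup>2 * B"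
  proof -
    have "(1 + d) * (1 + d * E) ^ 3 * B \<le> (1 + d * (1 + 10 * E)) * B"
      using c1 B unfolding y_def by (intro mult_right_mono) auto
    then show ?thesis using hB by (simp add: algebra_simps)
  qed
  have "r * B' \<le> r * ((1 + d * (1 + 10 * E)) * B + 2 * d * E\<^sup>2 * A + 2 * d * E\<^sup>2 * B)"
    using hB' r0 by (rule mult_left_mono)
  also have "\<dots> = r * B + d * (1 + 10 * E + 2 * E\<^sup>2) * (r * B) + 2 * d * E\<^sup>2 * (r * A)"
    by (simp add: algebra_simps)
  also have "2 * d * E\<^sup>2 * (r * A) \<le> 2 * d * E\<^sup>2 * (C1 * A)"
    using r1 A d0 by (intro mult_left_mono mult_right_mono) auto
  finally have rB: "r * B' \<le> r * B + d * (1 + 10 * E + 2 * E\<^sup>2) * (r * B) + 2 * d * E\<^sup>2 * (C1 * A)"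
    by linarith
  have rB0: "r * B \<ge> 0" using r0 B by simp
  have "A' + r * B' \<le> A + d * (2 * E + 2 * E\<^sup>2 * C1) * A + (r * B + d * (1 + 10 * E + 2 * E\<^sup>2) * (r * B))"
    using hA rB by (simp add: algebra_simps)
  also have "d * (2 * E + 2 * E\<^sup>2 * C1) * A \<le> d * K * A"
    unfolding K_def using d0 A E0 by (intro mult_right_mono mult_left_mono) auto
  also have "d * (1 + 10 * E + 2 * E\<^sup>2) * (r * B) \<le> d * K * (r * B)"
    unfolding K_def using d0 rB0 E0 C10 by (intro mult_right_mono mult_left_mono) auto
  finally have s1: "A' + r * B' \<le> (1 + K * d) * (A + r * B)" by (simp add: algebra_simps)
  have "(1 + K * d) * (A + r * B) \<le> (1 + K * d) * (1 + K * d) * (A + r * B)"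
  proof -
    have "1 \<le> 1 + K * d" using K0 d0 by simp
    hence "1 * (1 + K * d) \<le> (1 + K * d) * (1 + K * d)" by (intro mult_right_mono) auto
    then show ?thesis using A rB0 by (intro mult_right_mono) auto
  qed
  with s1 show ?thesis unfolding K_def by (simp add: power2_eq_square)
qed

lemma part_mono:
  assumes P: "partition K p L" and ij: "i \<le> j" and jK: "j \<le> K"
  shows "p i \<le> p j"
  using ij jK
proof (induction j)
  case 0 then show ?case by simp
next
  case (Suc j)
  show ?case
  proof (cases "i = Suc j")
    case True then show ?thesis by simp
  next
    case False
    then have "i \<le> j" "j < K" using Suc by auto
    then have "p i \<le> p j" "p j < p (Suc j)" using Suc P unfolding partition_def by auto
    then show ?thesis by simp
  qed
qed

theorem lemma9:
  fixes u ux uxx :: "real \<Rightarrow> real \<Rightarrow> real" and T C1 :: real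
  assumes T_pos: "T > 0"
    and C1_pos: "C1 > 0"
    and u_per: "\<And>x t. u (x + 1) t = u x t"
    and u_dx: "\<And>x t. t \<in> {0..T} \<Longrightarrow> ((\<lambda>y. u y t) has_real_derivative ux x t) (at x)"
    and ux_dx: "\<And>x t. t \<in> {0..T} \<Longrightarrow> ((\<lambda>y. ux y t) has_real_derivative uxx x t) (at x)"
    and u_cont: "continuous_on (UNIV \<times> {0..T}) (\<lambda>(x, t). u x t)"
    and ux_cont: "continuous_on (UNIV \<times> {0..T}) (\<lambda>(x, t). ux x t)"
    and uxx_cont: "continuous_on (UNIV \<times> {0..T}) (\<lambda>(x, t). uxx x t)"
  shows "\<exists>C>0. \<exists>\<delta>>0. \<forall>N tm M xm n g.
           partition N tm T \<longrightarrow> partition M xm 1 \<longrightarrow>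
           mesh_size N tm < 1 \<longrightarrow>
           (mesh_size M xm) ^ 4 \<le> C1 * mesh_size N tm \<longrightarrow>
           n < N \<longrightarrow> tm (Suc n) - tm n \<le> \<delta> \<longrightarrow> H2_per g \<longrightarrow>
           (H2_per (g \<circ> Xmap u (tm (Suc n) - tm n) (tm (Suc n))) \<and>
            H2_hdt_norm (mesh_size M xm) (mesh_size N tm)
                (g \<circ> Xmap u (tm (Suc n) - tm n) (tm (Suc n)))
              \<le> (1 + C * (tm (Suc n) - tm n)) *
                H2_hdt_norm (mesh_size M xm) (mesh_size N tm) g)"
proof -
  interpret V: vel u ux uxx T
    by (rule vel.intro[OF u_per u_dx ux_dx u_cont ux_cont uxx_cont])
  obtain E where E0: "E \<ge> 0" and XP: "\<forall>d t1. 0 < d \<longrightarrow> d \<le> 1 \<longrightarrow> 0 \<le> t1 - d \<longrightarrow> t1 \<le> T \<longrightarrow>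
     (\<exists>X1 X2. (\<forall>x. (Xmap u d t1 has_real_derivative X1 x) (at x)) \<and>
              (\<forall>x. (X1 has_real_derivative X2 x) (at x)) \<and> continuous_on UNIV X2 \<and>
              (\<forall>x. \<bar>X1 x - 1\<bar> \<le> d * E) \<and> (\<forall>x. \<bar>X2 x\<bar> \<le> d * E) \<and>
              (\<forall>x. Xmap u d t1 (x + 1) = Xmap u d t1 x + 1))"
    using V.Xprops by blast
  define \<delta> where "\<delta> = min 1 (1 / (2 * (E + 1)))"
  define C where "C = 1 + 12 * E + 2 * E\<^sup>2 + 2 * E\<^sup>2 * C1"
  have C0: "C > 0" unfolding C_def using E0 C1_pos by (simp add: add_pos_nonneg)
  have \<delta>0: "\<delta> > 0" unfolding \<delta>_def using E0 by simp
  show ?thesis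
  proof (rule exI[of _ C], rule conjI[OF C0], rule exI[of _ \<delta>], rule conjI[OF \<delta>0], intro allI impI)
    fix N tm M xm n g
    assume P1: "partition N tm T" and P2: "partition M xm 1" and ms: "mesh_size N tm < 1"
      and hC: "(mesh_size M xm) ^ 4 \<le> C1 * mesh_size N tm" and nN: "n < N"
      and d\<delta>: "tm (Suc n) - tm n \<le> \<delta>" and H: "H2_per g"
    define d where "d = tm (Suc n) - tm n"
    define t1 where "t1 = tm (Suc n)"
    have d0: "d > 0" using P1 nN unfolding partition_def d_def by simp
    have d1: "d \<le> 1" using d\<delta> unfolding d_def \<delta>_def by simp
    have dE: "d * E \<le> 1 / 2"
    proof -
      have "d \<le> 1 / (2 * (E + 1))" using d\<delta> unfolding d_def \<delta>_def by simp
      hence "d * E \<le> 1 / (2 * (E + 1)) * E" using E0 by (rule mult_right_mono)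
      also have "\<dots> \<le> 1 / 2" using E0 by (simp add: field_simps)
      finally show ?thesis .
    qed
    have tn0: "tm n \<ge> 0" using part_mono[OF P1, of 0 n] P1 nN unfolding partition_def by simp
    have t1T: "t1 \<le> T" using part_mono[OF P1, of "Suc n" N] P1 nN unfolding partition_def t1_def by simp
    have t1d: "t1 - d = tm n" unfolding t1_def d_def by simp
    obtain X1 X2 where X: "\<forall>x. (Xmap u d t1 has_real_derivative X1 x) (at x)"
        "\<forall>x. (X1 has_real_derivative X2 x) (at x)" "continuous_on UNIV X2"
        "\<forall>x. \<bar>X1 x - 1\<bar> \<le> d * E" "\<forall>x. \<bar>X2 x\<bar> \<le> d * E"
        "\<forall>x. Xmap u d t1 (x + 1) = Xmap u d t1 x + 1"
    proof -
      have "0 \<le> t1 - d" using t1d tn0 by simp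
      from XP[rule_format, OF d0 d1 this t1T] show ?thesis using that by blast
    qed
    interpret XS: Xsetup "Xmap u d t1" X1 X2 d E
      by (rule Xsetup.intro[OF X(1)[rule_format] X(2)[rule_format] X(3) X(4)[rule_format] X(5)[rule_format]
          X(6)[rule_format] d0 d1 E0 dE])
    let ?X = "Xmap u d t1"
    have e1: "H2_per (g \<circ> ?X)" by (rule XS.est(1)[OF H])
    have e2: "integral {0..1} (\<lambda>x. ((g \<circ> ?X) x)\<^sup>2) \<le> (1 + 2 * d * E) * integral {0..1} (\<lambda>x. (g x)\<^sup>2)"
      by (rule XS.est(2)[OF H])
    have e3: "integral {0..1} (\<lambda>x. (d2 (g \<circ> ?X) x)\<^sup>2) \<le>
           (1 + d) * (1 + d * E) ^ 3 * integral {0..1} (\<lambda>x. (d2 g x)\<^sup>2)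
           + 2 * d * E\<^sup>2 * (integral {0..1} (\<lambda>x. (g x)\<^sup>2) + integral {0..1} (\<lambda>x. (d2 g x)\<^sup>2))"
      by (rule XS.est(3)[OF H])
    define h where "h = mesh_size M xm"
    define Dt where "Dt = mesh_size N tm"
    have Dtd: "d \<le> Dt"
    proof -
      have "d \<in> (\<lambda>i. tm (Suc i) - tm i) ` {..<N}" using nN unfolding d_def by auto
      then show ?thesis unfolding Dt_def mesh_size_def by (intro Max_ge) auto
    qed
    have Dt0: "Dt > 0" using Dtd d0 by simp
    define r where "r = h ^ 4 / Dt"
    have r0: "r \<ge> 0" unfolding r_def using Dt0 by (simp add: zero_le_even_power)
    have r1: "r \<le> C1" unfolding r_def using hC Dt0 unfolding h_def Dt_def by (simp add: divide_le_eq)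
    define A where "A = integral {0..1} (\<lambda>x. (g x)\<^sup>2)"
    define B where "B = integral {0..1} (\<lambda>x. (d2 g x)\<^sup>2)"
    define A' where "A' = integral {0..1} (\<lambda>x. ((g \<circ> ?X) x)\<^sup>2)"
    define B' where "B' = integral {0..1} (\<lambda>x. (d2 (g \<circ> ?X) x)\<^sup>2)"
    have A0: "A \<ge> 0" "B \<ge> 0" "A' \<ge> 0" "B' \<ge> 0" unfolding A_def B_def A'_def B'_def by (auto intro: int_nonneg)
    have L2sq: "(L2_norm f)\<^sup>2 = integral {0..1} (\<lambda>x. (f x)\<^sup>2)" for f
      unfolding L2_norm_def by (rule real_sqrt_pow2) (auto intro: int_nonneg)
    have n1: "H2_hdt_norm h Dt (g \<circ> ?X) = sqrt (A' + r * B')"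
      unfolding H2_hdt_norm_def L2sq A'_def B'_def r_def by simp
    have n2: "H2_hdt_norm h Dt g = sqrt (A + r * B)"
      unfolding H2_hdt_norm_def L2sq A_def B_def r_def by simp
    have ineq: "A' + r * B' \<le> (1 + C * d)\<^sup>2 * (A + r * B)"
      unfolding C_def
      by (rule arith_final[OF A0(1,2) r0 r1 d0 d1 E0 dE])
         (use e2 e3 in \<open>simp_all add: A_def B_def A'_def B'_def\<close>)
    have "sqrt (A' + r * B') \<le> sqrt ((1 + C * d)\<^sup>2 * (A + r * B))" using ineq by (rule real_sqrt_le_mono)
    also have "\<dots> = (1 + C * d) * sqrt (A + r * B)"
      using C0 d0 by (simp add: real_sqrt_mult)
    finally have fin: "H2_hdt_norm h Dt (g \<circ> ?X) \<le> (1 + C * d) * H2_hdt_norm h Dt g" unfolding n1 n2 .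
    show "H2_per (g \<circ> Xmap u (tm (Suc n) - tm n) (tm (Suc n))) \<and>
            H2_hdt_norm (mesh_size M xm) (mesh_size N tm)
                (g \<circ> Xmap u (tm (Suc n) - tm n) (tm (Suc n)))
              \<le> (1 + C * (tm (Suc n) - tm n)) *
                H2_hdt_norm (mesh_size M xm) (mesh_size N tm) g"
      using e1 fin unfolding h_def Dt_def d_def t1_def by (intro conjI)
  qed
qed

end
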